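(* Setting: $\Phi(w)=f(w)+g(w)+h(w)$ on $\mathbb{R}^d$, where $f(w)=\mathbb{E}_{\xi}[F(w,\xi)]$ is $L$-smooth, for every $w$ the stochastic gradient $\nabla F(w,\xi)$ satisfies $\mathbb{E}_\xi[\nabla F(w,\xi)]=\nabla f(w)$ and $\mathbb{E}_\xi\|\nabla F(w,\xi)-\nabla f(w)\|_2^2\le\sigma^2$; $g:\mathbb{R}^d\to\mathbb{R}$ is such that for every $\lambda>0$ and $w$ the minimum of $x\mapsto \frac{1}{2\lambda}\|w-x\|_2^2+g(x)$ is attained at a (chosen) point $\zeta^{\lambda}(w)$; $h$ is proper, closed and convex. Let $e_\lambda g(w)=\frac{1}{2\lambda}\|w-\zeta^{\lambda}(w)\|_2^2+g(\zeta^\lambda(w))$ and $\tilde\Phi_{\lambda}=f+e_{\lambda}g+h$, and assume $\tilde\Phi_\lambda$ has a global minimizer $w^*_\lambda$. Algorithm MBSPA: given $w^1\in\mathbb{R}^d$, $N\in\mathbb{Z}_{>0}$ and $\alpha,\theta\in\mathbb{R}$, set $\lambda=N^{-\theta}$, $L_\lambda=L+N^{\theta}$, $\gamma=1/L_\lambda$, $M=\lceil N^{\alpha}\rceil$. For $k=1,\dots,N$: draw $\xi^k=(\xi^k_1,\dots,\xi^k_M)$ i.i.d. copies of $\xi$, independent of the past, set $\nabla A^k_{\lambda,M}(w^k,\xi^k)=\frac1M\sum_{j=1}^M\nabla F(w^k,\xi^k_j)+\frac1\lambda\left(w^k-\zeta^\lambda(w^k)\right)$ and $w^{k+1}=\operatorname{prox}_{\gamma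 h}\left(w^k-\gamma\nabla A^k_{\lambda,M}(w^k,\xi^k)\right)$. Finally draw $R$ uniformly from $\{1,\dots,N\}$ and output $w^R$. Claim: with $\mathcal{G}^R_{\gamma,E}(w^R):=\frac{1}{\gamma}\left(w^R-\operatorname{prox}_{\gamma h}\left(w^R-\gamma\left(\nabla f(w^R)+\frac1\lambda(w^R-\zeta^\lambda(w^R))\right)\right)\right)$, $$\mathbb{E}\|\mathcal{G}^R_{\gamma,E}(w^R)\|_2^2\le \frac{L+N^{\theta}}{N}\tilde{\mathcal{D}}+\frac{6}{\lceil N^{\alpha}\rceil}\sigma^2,$$ where $\tilde{\mathcal{D}}=4\left(\tilde\Phi_{\lambda}(w^1)-\tilde\Phi_{\lambda}(w^*_{\lambda})\right)$.
   Context: $\operatorname{prox}_{\gamma h}(v)=\arg\min_x\left(\frac{1}{2\gamma}\|v-x\|_2^2+h(x)\right)$. A function is $L$-smooth if it is differentiable with $L$-Lipschitz gradient. *)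

theory Defs
  imports "HOL-Probability.Probability"
begin

definition prox :: "real \<Rightarrow> ('a::real_normed_vector \<Rightarrow> ereal) \<Rightarrow> 'a \<Rightarrow> 'a" where
  "prox \<gamma> h v = (THE x. \<forall>y. ereal (1 / (2 * \<gamma>) * (norm (v - x))\<^sup>2) + h x
                                \<le> ereal (1 / (2 * \<gamma>) * (norm (v - y))\<^sup>2) + h y)"

definition proper_fun :: "('a \<Rightarrow> ereal) \<Rightarrow> bool" where
  "proper_fun h \<longleftrightarrow> (\<forall>x. h x \<noteq> -\<infinity>) \<and> (\<exists>x. h x \<noteq> \<infinity>)"

definition closed_fun :: "('a::topological_space \<Rightarrow> ereal) \<Rightarrow> bool" where
  "closed_fun h \<longleftrightarrow> closed {(x, t::real). h x \<le> ereal t}"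

definition convex_fun :: "('a::real_vector \<Rightarrow> ereal) \<Rightarrow> bool" where
  "convex_fun h \<longleftrightarrow> convex {(x, t::real). h x \<le> ereal t}"

definition env :: "('a::real_normed_vector \<Rightarrow> real) \<Rightarrow> (real \<Rightarrow> 'a \<Rightarrow> 'a) \<Rightarrow> real \<Rightarrow> 'a \<Rightarrow> real" where
  "env g \<zeta> lam w = 1 / (2 * lam) * (norm (w - \<zeta> lam w))\<^sup>2 + g (\<zeta> lam w)"

text \<open>MBSPA iterates for a fixed realisation xi k j of the samples (k-th iteration, j-th
  batch element).  mbspa ... n is w^{n+1}; so w^k = mbspa ... (k - 1).\<close>
primrec mbspa :: "('a::real_normed_vector \<Rightarrow> 'b \<Rightarrow> 'a) \<Rightarrow> (real \<Rightarrow> 'a \<Rightarrow> 'a) \<Rightarrow> ('a \<Rightarrow> ereal)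
    \<Rightarrow> real \<Rightarrow> real \<Rightarrow> nat \<Rightarrow> (nat \<Rightarrow> nat \<Rightarrow> 'b) \<Rightarrow> 'a \<Rightarrow> nat \<Rightarrow> 'a" where
  "mbspa G \<zeta> h lam \<gamma> M xi w1 0 = w1"
| "mbspa G \<zeta> h lam \<gamma> M xi w1 (Suc n) =
     (let w = mbspa G \<zeta> h lam \<gamma> M xi w1 n;
          dA = (1 / real M) *\<^sub>R (\<Sum>j = 1..M. G w (xi (Suc n) j)) + (1 / lam) *\<^sub>R (w - \<zeta> lam w)
      in prox \<gamma> h (w - \<gamma> *\<^sub>R dA))"

definition grad_map :: "('a::real_normed_vector \<Rightarrow> 'a) \<Rightarrow> (real \<Rightarrow> 'a \<Rightarrow> 'a) \<Rightarrow> ('a \<Rightarrow> ereal)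
    \<Rightarrow> real \<Rightarrow> real \<Rightarrow> 'a \<Rightarrow> 'a" where
  "grad_map gradf \<zeta> h lam \<gamma> w =
     (1 / \<gamma>) *\<^sub>R (w - prox \<gamma> h (w - \<gamma> *\<^sub>R (gradf w + (1 / lam) *\<^sub>R (w - \<zeta> lam w))))"

end

theory Submission
  imports Defs
begin

lemma norm_diff_sq: "(norm (a - b))\<^sup>2 = (norm a)\<^sup>2 - 2 * (a \<bullet> b) + (norm (b::'a::real_inner))\<^sup>2"
  by (simp add: power2_norm_eq_inner inner_diff_left inner_diff_right inner_commute)

lemma norm_add_sq: "(norm (a + b))\<^sup>2 = (norm a)\<^sup>2 + 2 * (a \<bullet> b) + (norm (b::'a::real_inner))\<^sup>2"
  by (simp add: power2_norm_eq_inner inner_add_left inner_add_right inner_commute)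

lemma affine_minorant:
  fixes h :: "'a::euclidean_space \<Rightarrow> ereal"
  assumes hp: "proper_fun h" and hc: "closed_fun h" and hv: "convex_fun h"
  shows "\<exists>a b. \<forall>x. ereal (a \<bullet> x + b) \<le> h x"
proof -
  obtain x0 where x0: "h x0 \<noteq> \<infinity>" using hp unfolding proper_fun_def by auto
  have "h x0 \<noteq> -\<infinity>" using hp unfolding proper_fun_def by auto
  with x0 obtain c where c: "h x0 = ereal c" by (cases "h x0") auto
  define S where "S = {(x, t::real). h x \<le> ereal t}"
  have cS: "closed S" "convex S" using hc hv unfolding S_def closed_fun_def convex_fun_def by auto
  have "(x0, c - 1) \<notin> S" using c unfolding S_def by auto
  from separating_hyperplane_closed_point[OF cS(2) cS(1) this]
  obtain a b where ab: "inner a (x0, c - 1) < b" "\<forall>x\<in>S. inner a x > b" by blast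
  obtain a1 a2 where a: "a = (a1, a2)" by (cases a)
  have in1: "a1 \<bullet> x + a2 * t > b" if "h x \<le> ereal t" for x t
    using ab(2) that unfolding S_def a by (auto simp: inner_Pair)
  have "a1 \<bullet> x0 + a2 * c > b" using in1[of x0 c] c by simp
  moreover have "a1 \<bullet> x0 + a2 * (c - 1) < b" using ab(1) unfolding a by (simp add: inner_Pair)
  ultimately have a2: "a2 > 0" by (simp add: algebra_simps)
  show ?thesis
  proof (intro exI allI)
    fix x
    show "ereal ((-(1/a2)) *\<^sub>R a1 \<bullet> x + b / a2) \<le> h x"
    proof (cases "h x")
      case (real t)
      have "a1 \<bullet> x + a2 * t > b" using in1[of x t] real by simp
      then have "(-(1/a2)) *\<^sub>R a1 \<bullet> x + b / a2 \<le> t" using a2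
        by (simp add: field_simps inner_commute)
      then show ?thesis using real by simp
    next
      case PInf then show ?thesis by simp
    next
      case MInf then show ?thesis using hp unfolding proper_fun_def by auto
    qed
  qed
qed

lemma prox_min_exists:
  fixes h :: "'a::euclidean_space \<Rightarrow> ereal"
  assumes hp: "proper_fun h" and hc: "closed_fun h" and hv: "convex_fun h" and g: "\<gamma> > 0"
  shows "\<exists>p. \<forall>y. ereal (1 / (2 * \<gamma>) * (norm (v - p))\<^sup>2) + h p
                  \<le> ereal (1 / (2 * \<gamma>) * (norm (v - y))\<^sup>2) + h y"
proof -
  define q where "q x = 1 / (2 * \<gamma>) * (norm (v - x))\<^sup>2" for x
  obtain a b where ab: "\<And>x. ereal (a \<bullet> x + b) \<le> h x" using affine_minorant[OF hp hc hv] by blast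
  obtain x0 where x0: "h x0 \<noteq> \<infinity>" using hp unfolding proper_fun_def by auto
  have "h x0 \<noteq> -\<infinity>" using hp unfolding proper_fun_def by auto
  with x0 obtain c where c: "h x0 = ereal c" by (cases "h x0") auto
  define C where "C = q x0 + c"
  define E where "E = {(x, t::real). h x \<le> ereal t} \<inter> {p. q (fst p) + snd p \<le> C}"
  define K where "K = C - b + norm a * norm v"
  define B where "B = max 1 (2 * \<gamma> * \<bar>K\<bar> + 2 * \<gamma> * norm a)"
  have bnd: "norm (v - x) \<le> B \<and> b - norm a * (norm v + B) \<le> t \<and> t \<le> C" if "(x, t) \<in> E" for x t
  proof -
    from that have h1: "h x \<le> ereal t" and h2: "q x + t \<le> C" unfolding E_def by auto
    have t1: "a \<bullet> x + b \<le> t" using ab[of x] h1 by (meson ereal_less_eq(3) order_trans)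
    have "a \<bullet> x \<ge> - (norm a * norm x)"
      using Cauchy_Schwarz_ineq2[of a x] by (simp add: abs_le_iff) 
    moreover have nx: "norm x \<le> norm v + norm (v - x)"
      by (metis norm_minus_commute norm_triangle_sub)
    ultimately have t2: "t \<ge> b - norm a * (norm v + norm (v - x))"
      using t1 mult_left_mono[OF nx norm_ge_zero[of a]] by linarith
    have q0: "q x \<ge> 0" unfolding q_def using g by simp
    define r where "r = norm (v - x)"
    have "r\<^sup>2 / (2 * \<gamma>) \<le> K + norm a * r"
      using h2 t2 unfolding q_def r_def K_def by (simp add: algebra_simps)
    then have rr: "r * r \<le> 2 * \<gamma> * K + 2 * \<gamma> * norm a * r" using g
      by (simp add: field_simps power2_eq_square)
    have rB: "r \<le> B"
    proof (cases "r \<le> 1")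
      case True then show ?thesis unfolding B_def by simp
    next
      case False
      then have "r * r \<le> 2 * \<gamma> * \<bar>K\<bar> * r + 2 * \<gamma> * norm a * r"
      proof -
        have "2 * \<gamma> * K \<le> 2 * \<gamma> * \<bar>K\<bar>" using g by (simp add: mult_left_mono)
        also have "\<dots> = 2 * \<gamma> * \<bar>K\<bar> * 1" by simp
        also have "\<dots> \<le> 2 * \<gamma> * \<bar>K\<bar> * r" using False g by (intro mult_left_mono) auto
        finally show ?thesis using rr by linarith
      qed
      then have "r \<le> 2 * \<gamma> * \<bar>K\<bar> + 2 * \<gamma> * norm a" using False
        by (simp add: distrib_right[symmetric] mult_le_cancel_right)
      then show ?thesis unfolding B_def by simp
    qed
    have "t \<le> C" using h2 q0 by linarith
    moreover have "b - norm a * (norm v + B) \<le> t"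
      using t2 rB unfolding r_def by (smt (verit) mult_left_mono norm_ge_zero)
    ultimately show ?thesis using rB unfolding r_def by simp
  qed
  have "E \<subseteq> cball v B \<times> {b - norm a * (norm v + B) .. C}"
    using bnd by (auto simp: dist_norm)
  then have bE: "bounded E" by (rule bounded_subset[rotated]) (intro bounded_Times bounded_cball bounded_closed_interval)
  have cq: "continuous_on UNIV (\<lambda>p. q (fst p) + snd p)" unfolding q_def by (intro continuous_intros)
  have "closed E" unfolding E_def
    using hc unfolding closed_fun_def
    using g by (intro closed_Int) (auto intro!: closed_Collect_le continuous_intros simp: q_def)
  with bE have cE: "compact E" by (simp add: compact_eq_bounded_closed)
  have "(x0, c) \<in> E" unfolding E_def C_def using c by simp
  then have "E \<noteq> {}" by auto
  from continuous_attains_inf[OF cE this continuous_on_subset[OF cq]]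
  obtain p where pE: "p \<in> E" and pmin: "\<And>y. y \<in> E \<Longrightarrow> q (fst p) + snd p \<le> q (fst y) + snd y" by auto
  obtain xs ts where p: "p = (xs, ts)" by (cases p)
  show ?thesis
  proof (intro exI allI)
    fix y
    have "ereal (q xs) + h xs \<le> ereal (q xs + ts)"
    proof -
      have "h xs \<le> ereal ts" using pE p unfolding E_def by simp
      then have "ereal (q xs) + h xs \<le> ereal (q xs) + ereal ts" by (rule add_left_mono)
      then show ?thesis by simp
    qed
    also have "\<dots> \<le> ereal (q y) + h y"
    proof (cases "h y")
      case (real s)
      show ?thesis
      proof (cases "q y + s \<le> C")
        case True
        then have "(y, s) \<in> E" unfolding E_def using real by simp
        from pmin[OF this] show ?thesis using p real by simp
      next
        case False
        have "q xs + ts \<le> C" using pE p unfolding E_def by simp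
        then show ?thesis using False real by simp
      qed
    next
      case PInf then show ?thesis by simp
    next
      case MInf then show ?thesis using hp unfolding proper_fun_def by auto
    qed
    finally show "ereal (1 / (2 * \<gamma>) * (norm (v - xs))\<^sup>2) + h xs
                  \<le> ereal (1 / (2 * \<gamma>) * (norm (v - y))\<^sup>2) + h y" unfolding q_def .
  qed
qed

lemma le_by_small:
  fixes X Y Z :: real
  assumes "\<And>t. 0 < t \<Longrightarrow> t \<le> 1 \<Longrightarrow> X \<le> Y + t * Z" "Z \<ge> 0"
  shows "X \<le> Y"
proof (rule ccontr)
  assume "\<not> X \<le> Y"
  define t where "t = min 1 ((X - Y) / (Z + 1))"
  have t: "0 < t" "t \<le> 1" using \<open>\<not> X \<le> Y\<close> assms(2) unfolding t_def by auto
  have "t * Z \<le> (X - Y) / (Z + 1) * Z" unfolding t_def using assms(2) by (intro mult_right_mono) auto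
  also have "\<dots> = (X - Y) * (Z / (Z + 1))" by simp
  also have "\<dots> < (X - Y) * 1"
    using \<open>\<not> X \<le> Y\<close> assms(2) by (intro mult_strict_left_mono) auto
  also have "\<dots> = X - Y" by simp
  finally show False using assms(1)[OF t] by linarith
qed

lemma convex_funD:
  assumes "convex_fun h" "h x = ereal a" "h y = ereal b" "0 \<le> u" "u \<le> 1"
  shows "h ((1 - u) *\<^sub>R x + u *\<^sub>R y) \<le> ereal ((1 - u) * a + u * b)"
proof -
  have cv: "convex {(x, t::real). h x \<le> ereal t}" using assms(1) unfolding convex_fun_def .
  have "(1 - u) *\<^sub>R (x, a) + u *\<^sub>R (y, b) \<in> {(x, t::real). h x \<le> ereal t}"
    by (rule convexD[OF cv]) (use assms in auto)
  then show ?thesis by simp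
qed

lemma prox_char:
  fixes h :: "'a::euclidean_space \<Rightarrow> ereal"
  assumes hp: "proper_fun h" and hv: "convex_fun h" and g: "\<gamma> > 0"
    and pmin: "\<And>y. ereal (1 / (2 * \<gamma>) * (norm (v - p))\<^sup>2) + h p
                  \<le> ereal (1 / (2 * \<gamma>) * (norm (v - y))\<^sup>2) + h y"
  shows "\<exists>hp. h p = ereal hp \<and> (\<forall>y b. h y = ereal b \<longrightarrow> hp + ((v - p) \<bullet> (y - p)) / \<gamma> \<le> b)"
proof -
  define q where "q x = 1 / (2 * \<gamma>) * (norm (v - x))\<^sup>2" for x
  obtain x0 where x0: "h x0 \<noteq> \<infinity>" using hp unfolding proper_fun_def by auto
  have "h x0 \<noteq> -\<infinity>" using hp unfolding proper_fun_def by auto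
  with x0 obtain c where c: "h x0 = ereal c" by (cases "h x0") auto
  have "ereal (q p) + h p \<le> ereal (q x0 + c)" using pmin[of x0] c unfolding q_def by simp
  then have "h p \<noteq> \<infinity>" by auto
  moreover have "h p \<noteq> -\<infinity>" using hp unfolding proper_fun_def by auto
  ultimately obtain hpv where hpv: "h p = ereal hpv" by (cases "h p") auto
  show ?thesis
  proof (intro exI conjI allI impI)
    show "h p = ereal hpv" by fact
    fix y b assume hy: "h y = ereal b"
    show "hpv + ((v - p) \<bullet> (y - p)) / \<gamma> \<le> b"
    proof (rule le_by_small)
      show "0 \<le> (norm (y - p))\<^sup>2 / (2 * \<gamma>)" using g by simp
      fix t :: real assume t: "0 < t" "t \<le> 1"
      define yt where "yt = (1 - t) *\<^sub>R p + t *\<^sub>R y"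
      have hyt: "h yt \<le> ereal ((1 - t) * hpv + t * b)"
        unfolding yt_def by (rule convex_funD[OF hv hpv hy]) (use t in auto)
      have "ereal (q p + hpv) \<le> ereal (q yt) + h yt" using pmin[of yt] hpv unfolding q_def by simp
      also have "\<dots> \<le> ereal (q yt) + ereal ((1 - t) * hpv + t * b)" using hyt by (rule add_left_mono)
      finally have i1: "q p + hpv \<le> q yt + ((1 - t) * hpv + t * b)" by simp
      have e: "v - yt = (v - p) - t *\<^sub>R (y - p)" unfolding yt_def by (simp add: algebra_simps)
      have "(norm (v - yt))\<^sup>2 = (norm (v - p))\<^sup>2 - 2 * ((v - p) \<bullet> (t *\<^sub>R (y - p))) + (norm (t *\<^sub>R (y - p)))\<^sup>2"
        unfolding e by (rule norm_diff_sq)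
      also have "\<dots> = (norm (v - p))\<^sup>2 - 2 * t * ((v - p) \<bullet> (y - p)) + t * t * (norm (y - p))\<^sup>2"
        by (simp add: power_mult_distrib power2_eq_square)
      finally have "q yt = 1 / (2 * \<gamma>) * ((norm (v - p))\<^sup>2 - 2 * t * ((v - p) \<bullet> (y - p)) + t * t * (norm (y - p))\<^sup>2)"
        unfolding q_def by simp
      also have "\<dots> = q p - t * ((v - p) \<bullet> (y - p)) / \<gamma> + t * t * (norm (y - p))\<^sup>2 / (2 * \<gamma>)"
        unfolding q_def using g by (simp add: field_simps)
      finally have "t * hpv \<le> t * (b - ((v - p) \<bullet> (y - p)) / \<gamma> + t * ((norm (y - p))\<^sup>2 / (2 * \<gamma>)))"
        using i1 by (simp add: algebra_simps)
      then have "hpv \<le> b - ((v - p) \<bullet> (y - p)) / \<gamma> + t * ((norm (y - p))\<^sup>2 / (2 * \<gamma>))"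
        using t by simp
      then show "hpv + ((v - p) \<bullet> (y - p)) / \<gamma> \<le> b + t * ((norm (y - p))\<^sup>2 / (2 * \<gamma>))" by simp
    qed
  qed
qed

lemma char_nonexp:
  fixes p p' v v' :: "'a::real_inner"
  assumes g: "\<gamma> > 0"
    and c1: "hp + ((v - p) \<bullet> (p' - p)) / \<gamma> \<le> hp'"
    and c2: "hp' + ((v' - p') \<bullet> (p - p')) / \<gamma> \<le> hp"
  shows "norm (p - p') \<le> norm (v - v')"
proof -
  have "((v - p) \<bullet> (p' - p)) / \<gamma> + ((v' - p') \<bullet> (p - p')) / \<gamma> \<le> 0" using c1 c2 by linarith
  then have "(v - p) \<bullet> (p' - p) + (v' - p') \<bullet> (p - p') \<le> 0" using g
    by (simp add: add_divide_distrib[symmetric] divide_le_0_iff)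
  moreover have "(v - p) \<bullet> (p' - p) + (v' - p') \<bullet> (p - p') = (norm (p - p'))\<^sup>2 - (v - v') \<bullet> (p - p')"
    unfolding power2_norm_eq_inner by (simp add: inner_diff_left inner_diff_right inner_commute)
  ultimately have "(norm (p - p'))\<^sup>2 \<le> (v - v') \<bullet> (p - p')" by linarith
  also have "\<dots> \<le> norm (v - v') * norm (p - p')" by (rule norm_cauchy_schwarz)
  finally have "norm (p - p') * norm (p - p') \<le> norm (v - v') * norm (p - p')" by (simp add: power2_eq_square)
  then show ?thesis
    by (cases "norm (p - p') = 0") (auto simp: mult_le_cancel_right)
qed

lemma prox_spec:
  fixes h :: "'a::euclidean_space \<Rightarrow> ereal"
  assumes hp: "proper_fun h" and hc: "closed_fun h" and hv: "convex_fun h" and g: "\<gamma> > 0"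
  shows "\<exists>hp. h (prox \<gamma> h v) = ereal hp \<and>
      (\<forall>y b. h y = ereal b \<longrightarrow> hp + ((v - prox \<gamma> h v) \<bullet> (y - prox \<gamma> h v)) / \<gamma> \<le> b)"
proof -
  let ?P = "\<lambda>x. \<forall>y. ereal (1 / (2 * \<gamma>) * (norm (v - x))\<^sup>2) + h x
                                \<le> ereal (1 / (2 * \<gamma>) * (norm (v - y))\<^sup>2) + h y"
  obtain p where p: "?P p" using prox_min_exists[OF hp hc hv g] by blast
  have uniq: "x = p" if Px: "?P x" for x
  proof -
    obtain a where a: "h p = ereal a" "\<forall>y b. h y = ereal b \<longrightarrow> a + ((v - p) \<bullet> (y - p)) / \<gamma> \<le> b"
      using prox_char[OF hp hv g p[rule_format]] by blast
    obtain a' where a': "h x = ereal a'" "\<forall>y b. h y = ereal b \<longrightarrow> a' + ((v - x) \<bullet> (y - x)) / \<gamma> \<le> b"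
      using prox_char[OF hp hv g Px[rule_format]] by blast
    have c1: "a' + ((v - x) \<bullet> (p - x)) / \<gamma> \<le> a" using a'(2) a(1) by blast
    have c2: "a + ((v - p) \<bullet> (x - p)) / \<gamma> \<le> a'" using a(2) a'(1) by blast
    have "norm (x - p) \<le> norm (v - v)"
      by (rule char_nonexp[OF g c1 c2])
    then show ?thesis by simp
  qed
  have "prox \<gamma> h v = p" unfolding prox_def
    apply (rule the_equality)
     apply (rule p)
    apply (erule uniq)
    done
  then show ?thesis using prox_char[OF hp hv g p[rule_format]] by simp
qed

lemma prox_nonexp:
  fixes h :: "'a::euclidean_space \<Rightarrow> ereal"
  assumes hp: "proper_fun h" and hc: "closed_fun h" and hv: "convex_fun h" and g: "\<gamma> > 0"
  shows "norm (prox \<gamma> h u - prox \<gamma> h v) \<le> norm (u - v)"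
proof -
  obtain a where a: "h (prox \<gamma> h u) = ereal a" "\<forall>y b. h y = ereal b \<longrightarrow> a + ((u - prox \<gamma> h u) \<bullet> (y - prox \<gamma> h u)) / \<gamma> \<le> b"
    using prox_spec[OF hp hc hv g] by blast
  obtain a' where a': "h (prox \<gamma> h v) = ereal a'" "\<forall>y b. h y = ereal b \<longrightarrow> a' + ((v - prox \<gamma> h v) \<bullet> (y - prox \<gamma> h v)) / \<gamma> \<le> b"
    using prox_spec[OF hp hc hv g] by blast
  have c1: "a + ((u - prox \<gamma> h u) \<bullet> (prox \<gamma> h v - prox \<gamma> h u)) / \<gamma> \<le> a'" using a(2) a'(1) by blast
  have c2: "a' + ((v - prox \<gamma> h v) \<bullet> (prox \<gamma> h u - prox \<gamma> h v)) / \<gamma> \<le> a" using a'(2) a(1) by blast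
  show ?thesis by (rule char_nonexp[OF g c1 c2])
qed

lemma descent_lemma:
  fixes f :: "'a::euclidean_space \<Rightarrow> real"
  assumes fg: "\<And>w. (f has_derivative (\<lambda>u. gradf w \<bullet> u)) (at w)"
    and lip: "\<And>x y. norm (gradf x - gradf y) \<le> L * norm (x - y)"
  shows "f y \<le> f x + gradf x \<bullet> (y - x) + L / 2 * (norm (y - x))\<^sup>2"
proof -
  define d where "d = y - x"
  define \<phi> where "\<phi> t = f (x + t *\<^sub>R d) - t * (gradf x \<bullet> d) - L / 2 * t\<^sup>2 * (norm d)\<^sup>2" for t
  have der: "DERIV \<phi> t :> (gradf (x + t *\<^sub>R d) \<bullet> d - gradf x \<bullet> d - L * t * (norm d)\<^sup>2)" for t
  proof -
    have h1: "((\<lambda>t. x + t *\<^sub>R d) has_derivative (\<lambda>s. s *\<^sub>R d)) (at t)"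
      by (auto intro!: derivative_eq_intros)
    have "((\<lambda>t. f (x + t *\<^sub>R d)) has_derivative (\<lambda>s. gradf (x + t *\<^sub>R d) \<bullet> (s *\<^sub>R d))) (at t)"
      using has_derivative_compose[OF h1 fg] by simp
    moreover have "(\<lambda>s. gradf (x + t *\<^sub>R d) \<bullet> (s *\<^sub>R d)) = (*) (gradf (x + t *\<^sub>R d) \<bullet> d)"
      by (auto simp: fun_eq_iff)
    ultimately have "((\<lambda>t. f (x + t *\<^sub>R d)) has_real_derivative (gradf (x + t *\<^sub>R d) \<bullet> d)) (at t)"
      unfolding has_field_derivative_def by simp
    then show ?thesis unfolding \<phi>_def
      by (auto intro!: derivative_eq_intros simp: power2_eq_square algebra_simps)
  qed
  have L0: "L \<ge> 0"
  proof -
    obtain e :: 'a where "e \<in> Basis" using nonempty_Basis by blast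
    then have "norm e = 1" by simp
    have "0 \<le> norm (gradf e - gradf 0)" by simp
    also have "\<dots> \<le> L * norm (e - 0)" by (rule lip)
    finally show ?thesis using \<open>norm e = 1\<close> by simp
  qed
  have "\<phi> 1 \<le> \<phi> 0"
  proof (rule DERIV_nonpos_imp_nonincreasing[of 0 1])
    fix t :: real assume t: "0 \<le> t" "t \<le> 1"
    have "gradf (x + t *\<^sub>R d) \<bullet> d - gradf x \<bullet> d = (gradf (x + t *\<^sub>R d) - gradf x) \<bullet> d"
      by (simp add: inner_diff_left)
    also have "\<dots> \<le> norm (gradf (x + t *\<^sub>R d) - gradf x) * norm d" by (rule norm_cauchy_schwarz)
    also have "\<dots> \<le> L * norm ((x + t *\<^sub>R d) - x) * norm d" by (intro mult_right_mono lip) auto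
    also have "\<dots> = L * t * (norm d)\<^sup>2" using t by (simp add: power2_eq_square)
    finally show "\<exists>y. DERIV \<phi> t :> y \<and> y \<le> 0" using der[of t] by auto
  qed simp
  then show ?thesis unfolding \<phi>_def d_def by (simp add: algebra_simps)
qed

lemma env_upper:
  assumes lam: "lam > 0"
    and zmin: "\<And>w x. 1 / (2 * lam) * (norm (w - \<zeta> lam w))\<^sup>2 + g (\<zeta> lam w) \<le> 1 / (2 * lam) * (norm (w - x))\<^sup>2 + g x"
  shows "env g \<zeta> lam y \<le> env g \<zeta> lam x + ((1 / lam) *\<^sub>R (x - \<zeta> lam x)) \<bullet> (y - x) + 1 / (2 * lam) * (norm (y - x))\<^sup>2"
proof -
  define I where "I = (x - \<zeta> lam x) \<bullet> (y - x)"
  define A where "A = (norm (x - \<zeta> lam x))\<^sup>2"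
  define B where "B = (norm (y - x))\<^sup>2"
  have "env g \<zeta> lam y \<le> 1 / (2 * lam) * (norm (y - \<zeta> lam x))\<^sup>2 + g (\<zeta> lam x)"
    unfolding env_def by (rule zmin)
  also have "y - \<zeta> lam x = (x - \<zeta> lam x) + (y - x)" by simp
  also have "(norm ((x - \<zeta> lam x) + (y - x)))\<^sup>2 = A + 2 * I + B"
    unfolding A_def B_def I_def by (rule norm_add_sq)
  also have "1 / (2 * lam) * (A + 2 * I + B) + g (\<zeta> lam x) = (1 / (2 * lam) * A + g (\<zeta> lam x)) + (1 / lam) * I + 1 / (2 * lam) * B"
    using lam by (simp add: field_simps)
  finally show ?thesis unfolding env_def A_def B_def I_def inner_scaleR_left by simp
qed


lemma inner_aux: "(c *\<^sub>R a - c *\<^sub>R b) \<bullet> (c *\<^sub>R a) = c * c * ((norm a)\<^sup>2 - b \<bullet> (a::'a::real_inner))"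
  by (simp add: inner_diff_left power2_norm_eq_inner algebra_simps)

lemma one_step_det:
  fixes h :: "'a::euclidean_space \<Rightarrow> ereal" and \<psi> :: "'a \<Rightarrow> real"
  assumes hp: "proper_fun h" and hc: "closed_fun h" and hv: "convex_fun h" and g: "\<gamma> > 0"
    and desc: "\<And>x y. \<psi> y \<le> \<psi> x + g\<psi> x \<bullet> (y - x) + Lg / 2 * (norm (y - x))\<^sup>2"
    and gL: "\<gamma> * Lg = 1"
    and hw: "h w = ereal hw"
  shows "\<exists>hw'. h (prox \<gamma> h (w - \<gamma> *\<^sub>R (g\<psi> w + \<delta>))) = ereal hw' \<and>
     \<psi> (prox \<gamma> h (w - \<gamma> *\<^sub>R (g\<psi> w + \<delta>))) + hw' \<le> \<psi> w + hw
       - \<gamma> / 4 * (norm ((1 / \<gamma>) *\<^sub>R (w - prox \<gamma> h (w - \<gamma> *\<^sub>R g\<psi> w))))\<^sup>2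
       + \<gamma> * (\<delta> \<bullet> ((1 / \<gamma>) *\<^sub>R (w - prox \<gamma> h (w - \<gamma> *\<^sub>R g\<psi> w))))
       + 3 * \<gamma> / 2 * (norm \<delta>)\<^sup>2"
proof -
  define v where "v = w - \<gamma> *\<^sub>R (g\<psi> w + \<delta>)"
  define p where "p = prox \<gamma> h v"
  define p0 where "p0 = prox \<gamma> h (w - \<gamma> *\<^sub>R g\<psi> w)"
  define Gt where "Gt = (1 / \<gamma>) *\<^sub>R (w - p)"
  define Gm where "Gm = (1 / \<gamma>) *\<^sub>R (w - p0)"
  have wp: "w - p = \<gamma> *\<^sub>R Gt" unfolding Gt_def using g by simp
  have wp0: "w - p0 = \<gamma> *\<^sub>R Gm" unfolding Gm_def using g by simp
  obtain hpv where hpv: "h p = ereal hpv"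
    and ch: "\<And>y b. h y = ereal b \<Longrightarrow> hpv + ((v - p) \<bullet> (y - p)) / \<gamma> \<le> b"
    using prox_spec[OF hp hc hv g, of v] unfolding p_def by blast
  have "hpv + ((v - p) \<bullet> (w - p)) / \<gamma> \<le> hw" by (rule ch[OF hw])
  moreover have "v - p = \<gamma> *\<^sub>R Gt - \<gamma> *\<^sub>R (g\<psi> w + \<delta>)" unfolding v_def using wp by (simp add: algebra_simps)
  then have "((v - p) \<bullet> (w - p)) / \<gamma> = \<gamma> * \<gamma> * ((norm Gt)\<^sup>2 - (g\<psi> w + \<delta>) \<bullet> Gt) / \<gamma>"
    unfolding wp by (simp only: inner_aux)
  also have "\<dots> = \<gamma> * ((norm Gt)\<^sup>2 - (g\<psi> w + \<delta>) \<bullet> Gt)" using g by (simp only: mult.assoc nonzero_mult_div_cancel_left)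
  also have "\<dots> = \<gamma> * (norm Gt)\<^sup>2 - \<gamma> * ((g\<psi> w + \<delta>) \<bullet> Gt)" by (rule right_diff_distrib)
  ultimately have c1: "hpv + \<gamma> * (norm Gt)\<^sup>2 - \<gamma> * ((g\<psi> w + \<delta>) \<bullet> Gt) \<le> hw" by simp
  have "\<psi> p \<le> \<psi> w + g\<psi> w \<bullet> (p - w) + Lg / 2 * (norm (p - w))\<^sup>2" by (rule desc)
  moreover have "p - w = - (\<gamma> *\<^sub>R Gt)" using wp by (simp add: algebra_simps)
  ultimately have "\<psi> p \<le> \<psi> w - \<gamma> * (g\<psi> w \<bullet> Gt) + (\<gamma> * Lg) * \<gamma> / 2 * (norm Gt)\<^sup>2"
    using g by (simp add: power_mult_distrib power2_eq_square algebra_simps)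
  then have c2: "\<psi> p \<le> \<psi> w - \<gamma> * (g\<psi> w \<bullet> Gt) + \<gamma> / 2 * (norm Gt)\<^sup>2" using gL by simp
  have s1: "\<psi> p + hpv \<le> \<psi> w + hw - \<gamma> / 2 * (norm Gt)\<^sup>2 + \<gamma> * (\<delta> \<bullet> Gt)"
    using c1 c2 by (simp add: inner_add_left algebra_simps power2_eq_square)
  have "norm (p0 - p) \<le> norm ((w - \<gamma> *\<^sub>R g\<psi> w) - v)" unfolding p0_def p_def by (rule prox_nonexp[OF hp hc hv g])
  also have "(w - \<gamma> *\<^sub>R g\<psi> w) - v = \<gamma> *\<^sub>R \<delta>" unfolding v_def by (simp add: algebra_simps)
  finally have np: "norm (p0 - p) \<le> \<gamma> * norm \<delta>" using g by simp
  have "Gt - Gm = (1 / \<gamma>) *\<^sub>R (p0 - p)" unfolding Gt_def Gm_def by (simp add: algebra_simps)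
  then have "norm (Gt - Gm) = norm (p0 - p) / \<gamma>" using g by simp
  then have nG: "norm (Gt - Gm) \<le> norm \<delta>" using np g by (simp add: divide_le_eq mult.commute)
  have "\<delta> \<bullet> Gt = \<delta> \<bullet> Gm + \<delta> \<bullet> (Gt - Gm)" by (simp add: inner_diff_right)
  also have "\<delta> \<bullet> (Gt - Gm) \<le> norm \<delta> * norm (Gt - Gm)" by (rule norm_cauchy_schwarz)
  also have "\<dots> \<le> norm \<delta> * norm \<delta>" using nG by (simp add: mult_left_mono)
  finally have i1: "\<delta> \<bullet> Gt \<le> \<delta> \<bullet> Gm + (norm \<delta>)\<^sup>2" by (simp add: power2_eq_square)
  have "(norm Gm)\<^sup>2 = (norm (Gt - (Gt - Gm)))\<^sup>2" by simp
  also have "\<dots> \<le> (norm Gt + norm (Gt - Gm))\<^sup>2"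
    by (intro power_mono norm_triangle_ineq4) simp
  also have "\<dots> \<le> 2 * (norm Gt)\<^sup>2 + 2 * (norm (Gt - Gm))\<^sup>2"
    by (smt (verit) power2_sum sum_squares_bound)
  also have "\<dots> \<le> 2 * (norm Gt)\<^sup>2 + 2 * (norm \<delta>)\<^sup>2"
    using nG by (simp add: power_mono)
  finally have i2: "(norm Gm)\<^sup>2 \<le> 2 * (norm Gt)\<^sup>2 + 2 * (norm \<delta>)\<^sup>2" .
  have "\<psi> p + hpv \<le> \<psi> w + hw - \<gamma> / 4 * (norm Gm)\<^sup>2 + \<gamma> * (\<delta> \<bullet> Gm) + 3 * \<gamma> / 2 * (norm \<delta>)\<^sup>2"
  proof -
    have "\<gamma> * (\<delta> \<bullet> Gt) \<le> \<gamma> * (\<delta> \<bullet> Gm + (norm \<delta>)\<^sup>2)" using i1 g by simp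
    moreover have "\<gamma> / 4 * (norm Gm)\<^sup>2 \<le> \<gamma> / 4 * (2 * (norm Gt)\<^sup>2 + 2 * (norm \<delta>)\<^sup>2)" using i2 g by simp
    ultimately show ?thesis using s1 by (simp add: algebra_simps)
  qed
  then show ?thesis using hpv unfolding p_def v_def Gm_def p0_def by blast
qed


lemma PD_sf: "prob_space D \<Longrightarrow> product_sigma_finite (\<lambda>_::'i. D)"
  unfolding product_sigma_finite_def using prob_space_imp_sigma_finite by blast

lemma one_more_sq:
  fixes g :: "'b \<Rightarrow> 'a::euclidean_space"
  assumes D: "prob_space D" and gi: "integrable D g" and gm: "(\<integral>\<xi>. g \<xi> \<partial>D) = mu"
    and gv: "integrable D (\<lambda>\<xi>. (norm (g \<xi> - mu))\<^sup>2)"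
  shows "(\<integral>\<^sup>+ y. ennreal ((norm (s + (g y - mu)))\<^sup>2) \<partial>D)
          = ennreal ((norm s)\<^sup>2 + (\<integral>\<xi>. (norm (g \<xi> - mu))\<^sup>2 \<partial>D))"
proof -
  interpret D: prob_space D by fact
  have eq: "(norm (s + (g y - mu)))\<^sup>2 = (norm s)\<^sup>2 + 2 * (s \<bullet> (g y - mu)) + (norm (g y - mu))\<^sup>2" for y
    by (rule norm_add_sq)
  have i1: "integrable D (\<lambda>y. s \<bullet> (g y - mu))" using gi by auto
  have int: "integrable D (\<lambda>y. (norm s)\<^sup>2 + 2 * (s \<bullet> (g y - mu)) + (norm (g y - mu))\<^sup>2)"
    using i1 gv by auto
  have "(\<integral>y. s \<bullet> (g y - mu) \<partial>D) = s \<bullet> (\<integral>y. g y - mu \<partial>D)"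
    using gi by simp
  also have "(\<integral>y. g y - mu \<partial>D) = 0" using gi gm by (simp add: D.prob_space)
  finally have z: "(\<integral>y. s \<bullet> (g y - mu) \<partial>D) = 0" by simp
  have "(\<integral>\<^sup>+ y. ennreal ((norm (s + (g y - mu)))\<^sup>2) \<partial>D)
      = ennreal (\<integral>y. (norm s)\<^sup>2 + 2 * (s \<bullet> (g y - mu)) + (norm (g y - mu))\<^sup>2 \<partial>D)"
    unfolding eq[symmetric] using int unfolding eq[symmetric] by (intro nn_integral_eq_integral) auto
  also have "(\<integral>y. (norm s)\<^sup>2 + 2 * (s \<bullet> (g y - mu)) + (norm (g y - mu))\<^sup>2 \<partial>D)
      = (norm s)\<^sup>2 + 2 * (\<integral>y. s \<bullet> (g y - mu) \<partial>D) + (\<integral>\<xi>. (norm (g \<xi> - mu))\<^sup>2 \<partial>D)"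
    using i1 gv by (simp add: D.prob_space)
  finally show ?thesis using z by simp
qed

lemma var_sum:
  fixes g :: "'b \<Rightarrow> 'a::euclidean_space" and J :: "'i set"
  assumes D: "prob_space D" and gi: "integrable D g" and gm: "(\<integral>\<xi>. g \<xi> \<partial>D) = mu"
    and gv: "integrable D (\<lambda>\<xi>. (norm (g \<xi> - mu))\<^sup>2)" and gs: "(\<integral>\<xi>. (norm (g \<xi> - mu))\<^sup>2 \<partial>D) \<le> s2"
    and J: "finite J"
  shows "(\<integral>\<^sup>+ b. ennreal ((norm (\<Sum>i\<in>J. g (b i) - mu))\<^sup>2) \<partial>PiM J (\<lambda>_. D)) \<le> ennreal (real (card J) * s2)"
  using J
proof (induction J rule: finite_induct)
  case empty
  then show ?case by simp
next
  case (insert i J)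
  interpret PS: product_sigma_finite "\<lambda>_::'i. D" using PD_sf[OF D] .
  interpret D: prob_space D by fact
  have "0 \<le> (\<integral>\<xi>. (norm (g \<xi> - mu))\<^sup>2 \<partial>D)" by (intro integral_nonneg_AE) auto
  then have s2: "s2 \<ge> 0" using gs by linarith
  have gmeas[measurable]: "g \<in> borel_measurable D" using gi by auto
  have "(\<integral>\<^sup>+ b. ennreal ((norm (\<Sum>i\<in>insert i J. g (b i) - mu))\<^sup>2) \<partial>PiM (insert i J) (\<lambda>_. D))
      = (\<integral>\<^sup>+ x. (\<integral>\<^sup>+ y. ennreal ((norm (\<Sum>j\<in>insert i J. g ((x(i := y)) j) - mu))\<^sup>2) \<partial>D) \<partial>PiM J (\<lambda>_. D))"
    using insert by (intro PS.product_nn_integral_insert) auto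
  also have "\<dots> = (\<integral>\<^sup>+ x. ennreal ((norm (\<Sum>j\<in>J. g (x j) - mu))\<^sup>2 + (\<integral>\<xi>. (norm (g \<xi> - mu))\<^sup>2 \<partial>D)) \<partial>PiM J (\<lambda>_. D))"
  proof (intro nn_integral_cong)
    fix x
    have "(\<Sum>j\<in>insert i J. g ((x(i := y)) j) - mu) = (\<Sum>j\<in>J. g (x j) - mu) + (g y - mu)" for y
    proof -
      have "(\<Sum>j\<in>J. g ((x(i := y)) j) - mu) = (\<Sum>j\<in>J. g (x j) - mu)"
        using insert(2) by (intro sum.cong) auto
      then show ?thesis using insert(1,2) by (simp add: add.commute)
    qed
    then show "(\<integral>\<^sup>+ y. ennreal ((norm (\<Sum>j\<in>insert i J. g ((x(i := y)) j) - mu))\<^sup>2) \<partial>D)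
        = ennreal ((norm (\<Sum>j\<in>J. g (x j) - mu))\<^sup>2 + (\<integral>\<xi>. (norm (g \<xi> - mu))\<^sup>2 \<partial>D))"
      using one_more_sq[OF D gi gm gv] by simp
  qed
  also have "\<dots> \<le> (\<integral>\<^sup>+ x. ennreal ((norm (\<Sum>j\<in>J. g (x j) - mu))\<^sup>2) + ennreal s2 \<partial>PiM J (\<lambda>_. D))"
  proof (intro nn_integral_mono)
    fix x
    let ?A = "(norm (\<Sum>j\<in>J. g (x j) - mu))\<^sup>2"
    have "ennreal (?A + (\<integral>\<xi>. (norm (g \<xi> - mu))\<^sup>2 \<partial>D)) \<le> ennreal (?A + s2)"
      by (rule ennreal_leI) (use gs in simp)
    also have "\<dots> = ennreal ?A + ennreal s2" using s2 by (simp add: ennreal_plus)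
    finally show "ennreal (?A + (\<integral>\<xi>. (norm (g \<xi> - mu))\<^sup>2 \<partial>D)) \<le> ennreal ?A + ennreal s2" .
  qed
  also have "\<dots> = (\<integral>\<^sup>+ x. ennreal ((norm (\<Sum>j\<in>J. g (x j) - mu))\<^sup>2) \<partial>PiM J (\<lambda>_. D)) + ennreal s2"
  proof -
    have "prob_space (PiM J (\<lambda>_. D))" using D by (intro prob_space_PiM) auto
    then show ?thesis by (subst nn_integral_add) (auto simp: prob_space.emeasure_space_1)
  qed
  also have "\<dots> \<le> ennreal (real (card J) * s2) + ennreal s2" using insert(3) by (rule add_right_mono)
  also have "\<dots> = ennreal (real (card (insert i J)) * s2)"
    using insert s2 by (simp add: ennreal_plus[symmetric] algebra_simps del: ennreal_plus)
  finally show ?case .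
qed


lemma inner_step:
  fixes h :: "'a::euclidean_space \<Rightarrow> ereal" and \<psi> :: "'a \<Rightarrow> real" and G :: "'a \<Rightarrow> 'b \<Rightarrow> 'a"
    and J :: "'i set"
  assumes D: "prob_space D" and J: "finite J" "card J = M" "M > 0"
    and hp: "proper_fun h" and hc: "closed_fun h" and hv: "convex_fun h" and g: "\<gamma> > 0"
    and desc: "\<And>x y. \<psi> y \<le> \<psi> x + g\<psi> x \<bullet> (y - x) + Lg / 2 * (norm (y - x))\<^sup>2"
    and gL: "\<gamma> * Lg = 1"
    and hw: "h w = ereal hw"
    and gi: "integrable D (G w)" and gm: "(\<integral>\<xi>. G w \<xi> \<partial>D) = gradf w"
    and gv: "integrable D (\<lambda>\<xi>. (norm (G w \<xi> - gradf w))\<^sup>2)" and gs: "(\<integral>\<xi>. (norm (G w \<xi> - gradf w))\<^sup>2 \<partial>D) \<le> \<sigma>2"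
    and lb: "\<And>y hy. h y = ereal hy \<Longrightarrow> \<phi>s \<le> \<psi> y + hy"
  shows "(\<integral>\<^sup>+ b. ennreal (\<psi> (prox \<gamma> h (w - \<gamma> *\<^sub>R ((1 / real M) *\<^sub>R (\<Sum>i\<in>J. G w (b i)) + (g\<psi> w - gradf w))))
              + real_of_ereal (h (prox \<gamma> h (w - \<gamma> *\<^sub>R ((1 / real M) *\<^sub>R (\<Sum>i\<in>J. G w (b i)) + (g\<psi> w - gradf w))))) - \<phi>s)
           + ennreal (\<gamma> / 4 * (norm ((1 / \<gamma>) *\<^sub>R (w - prox \<gamma> h (w - \<gamma> *\<^sub>R g\<psi> w))))\<^sup>2) \<partial>PiM J (\<lambda>_. D))
       \<le> ennreal (\<psi> w + hw - \<phi>s) + ennreal (3 * \<gamma> / 2 * (\<sigma>2 / real M))"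
proof -
  interpret D: prob_space D by fact
  interpret PS: product_sigma_finite "\<lambda>_::'i. D" using PD_sf[OF D] .
  have PJ: "prob_space (PiM J (\<lambda>_. D))" using D by (intro prob_space_PiM) auto
  interpret PJ: prob_space "PiM J (\<lambda>_. D)" by fact
  have gmeas[measurable]: "G w \<in> borel_measurable D" using gi by auto
  have "0 \<le> (\<integral>\<xi>. (norm (G w \<xi> - gradf w))\<^sup>2 \<partial>D)" by (intro integral_nonneg_AE) auto
  then have s20: "0 \<le> \<sigma>2" using gs by linarith
  define Gm where "Gm = (1 / \<gamma>) *\<^sub>R (w - prox \<gamma> h (w - \<gamma> *\<^sub>R g\<psi> w))"
  define S where "S b = (\<Sum>i\<in>J. G w (b i) - gradf w)" for b
  define \<delta> where "\<delta> b = (1 / real M) *\<^sub>R S b" for b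
  define st where "st b = prox \<gamma> h (w - \<gamma> *\<^sub>R ((1 / real M) *\<^sub>R (\<Sum>i\<in>J. G w (b i)) + (g\<psi> w - gradf w)))" for b
  define Rb where "Rb b = \<psi> w + hw - \<phi>s + \<gamma> * (\<delta> b \<bullet> Gm) + 3 * \<gamma> / 2 * (norm (\<delta> b))\<^sup>2" for b
  have Mr: "real M > 0" using J by simp
  have dA: "(1 / real M) *\<^sub>R (\<Sum>i\<in>J. G w (b i)) + (g\<psi> w - gradf w) = g\<psi> w + \<delta> b" for b
  proof -
    have "(1 / real M) *\<^sub>R (\<Sum>i\<in>J. G w (b i)) = (1 / real M) *\<^sub>R (S b + real M *\<^sub>R gradf w)"
      unfolding S_def using J by (simp add: sum_subtractf sum_constant_scaleR)
    also have "\<dots> = \<delta> b + gradf w" unfolding \<delta>_def using Mr by (simp add: scaleR_add_right)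
    finally show ?thesis by simp
  qed
  have pw: "ennreal (\<psi> (st b) + real_of_ereal (h (st b)) - \<phi>s) + ennreal (\<gamma> / 4 * (norm Gm)\<^sup>2) \<le> ennreal (Rb b)"
    and Rnn: "0 \<le> Rb b" for b
  proof -
    obtain hw' where hw': "h (st b) = ereal hw'"
      and ineq: "\<psi> (st b) + hw' \<le> \<psi> w + hw - \<gamma> / 4 * (norm Gm)\<^sup>2 + \<gamma> * (\<delta> b \<bullet> Gm) + 3 * \<gamma> / 2 * (norm (\<delta> b))\<^sup>2"
      using one_step_det[OF hp hc hv g desc gL hw, of "\<delta> b"] unfolding st_def dA Gm_def by blast
    have a0: "0 \<le> \<psi> (st b) + hw' - \<phi>s" using lb[OF hw'] by simp
    have b0: "0 \<le> \<gamma> / 4 * (norm Gm)\<^sup>2" using g by simp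
    have "ennreal (\<psi> (st b) + real_of_ereal (h (st b)) - \<phi>s) + ennreal (\<gamma> / 4 * (norm Gm)\<^sup>2)
        = ennreal (\<psi> (st b) + hw' - \<phi>s + \<gamma> / 4 * (norm Gm)\<^sup>2)" using a0 b0 hw' by (simp add: ennreal_plus)
    also have "\<dots> \<le> ennreal (Rb b)" unfolding Rb_def by (rule ennreal_leI) (use ineq in simp)
    finally show "ennreal (\<psi> (st b) + real_of_ereal (h (st b)) - \<phi>s) + ennreal (\<gamma> / 4 * (norm Gm)\<^sup>2) \<le> ennreal (Rb b)" .
    show "0 \<le> Rb b" using ineq a0 b0 unfolding Rb_def by linarith
  qed
  have compi: "integrable (PiM J (\<lambda>_. D)) (\<lambda>b. G w (b i))" if "i \<in> J" for i
  proof -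
    have "integrable (distr (PiM J (\<lambda>_. D)) D (\<lambda>b. b i)) (G w)"
      using distr_PiM_component[of J "\<lambda>_. D" i] that D gi by simp
    then show ?thesis by (rule integrable_distr[rotated]) (use that in measurable)
  qed
  have compint: "(\<integral>b. G w (b i) \<partial>PiM J (\<lambda>_. D)) = gradf w" if "i \<in> J" for i
  proof -
    have "(\<integral>b. G w (b i) \<partial>PiM J (\<lambda>_. D)) = (\<integral>\<xi>. G w \<xi> \<partial>distr (PiM J (\<lambda>_. D)) D (\<lambda>b. b i))"
      by (rule integral_distr[symmetric]) (use that in measurable)
    also have "\<dots> = gradf w" using distr_PiM_component[of J "\<lambda>_. D" i] that D gm by simp
    finally show ?thesis .
  qed
  have Si: "integrable (PiM J (\<lambda>_. D)) S" unfolding S_def using compi by auto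
  have Sint: "(\<integral>b. S b \<partial>PiM J (\<lambda>_. D)) = 0"
    unfolding S_def using compi compint by (simp add: Bochner_Integration.integral_sum Bochner_Integration.integral_diff PJ.prob_space)
  have Smeas[measurable]: "S \<in> borel_measurable (PiM J (\<lambda>_. D))" using Si by auto
  have vs: "(\<integral>\<^sup>+ b. ennreal ((norm (S b))\<^sup>2) \<partial>PiM J (\<lambda>_. D)) \<le> ennreal (real M * \<sigma>2)"
    unfolding S_def using var_sum[OF D gi gm gv gs J(1)] J by simp
  have S2i: "integrable (PiM J (\<lambda>_. D)) (\<lambda>b. (norm (S b))\<^sup>2)"
    by (rule integrableI_bounded) (use vs in \<open>auto intro: le_less_trans\<close>)
  have S2int: "(\<integral>b. (norm (S b))\<^sup>2 \<partial>PiM J (\<lambda>_. D)) \<le> real M * \<sigma>2"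
  proof -
    have "ennreal (\<integral>b. (norm (S b))\<^sup>2 \<partial>PiM J (\<lambda>_. D)) \<le> ennreal (real M * \<sigma>2)"
      using vs nn_integral_eq_integral[OF S2i] by simp
    moreover have "0 \<le> real M * \<sigma>2" using s20 by simp
    ultimately show ?thesis by (simp add: ennreal_le_iff)
  qed
  have dnorm: "(norm (\<delta> b))\<^sup>2 = (norm (S b))\<^sup>2 / (real M)\<^sup>2" for b
    unfolding \<delta>_def using Mr by (simp add: power_divide power_mult_distrib)
  have Ri: "integrable (PiM J (\<lambda>_. D)) Rb"
    unfolding Rb_def dnorm unfolding \<delta>_def using Si S2i by auto
  have Rint: "(\<integral>b. Rb b \<partial>PiM J (\<lambda>_. D)) \<le> \<psi> w + hw - \<phi>s + 3 * \<gamma> / 2 * (\<sigma>2 / real M)"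
  proof -
    have "(\<integral>b. Rb b \<partial>PiM J (\<lambda>_. D)) = \<psi> w + hw - \<phi>s + \<gamma> * ((1 / real M) *\<^sub>R (\<integral>b. S b \<partial>PiM J (\<lambda>_. D)) \<bullet> Gm)
        + 3 * \<gamma> / 2 * ((\<integral>b. (norm (S b))\<^sup>2 \<partial>PiM J (\<lambda>_. D)) / (real M)\<^sup>2)"
      unfolding Rb_def dnorm unfolding \<delta>_def using Si S2i by (simp add: PJ.prob_space)
    also have "\<dots> \<le> \<psi> w + hw - \<phi>s + 3 * \<gamma> / 2 * ((real M * \<sigma>2) / (real M)\<^sup>2)"
      using S2int g Mr unfolding Sint by (simp add: divide_right_mono)
    also have "(real M * \<sigma>2) / (real M)\<^sup>2 = \<sigma>2 / real M" using Mr by (simp add: power2_eq_square)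
    finally show ?thesis .
  qed
  have "(\<integral>\<^sup>+ b. ennreal (\<psi> (st b) + real_of_ereal (h (st b)) - \<phi>s) + ennreal (\<gamma> / 4 * (norm Gm)\<^sup>2) \<partial>PiM J (\<lambda>_. D))
      \<le> (\<integral>\<^sup>+ b. ennreal (Rb b) \<partial>PiM J (\<lambda>_. D))" by (intro nn_integral_mono pw)
  also have "\<dots> = ennreal (\<integral>b. Rb b \<partial>PiM J (\<lambda>_. D))" using Ri Rnn by (intro nn_integral_eq_integral) auto
  also have "\<dots> \<le> ennreal (\<psi> w + hw - \<phi>s + 3 * \<gamma> / 2 * (\<sigma>2 / real M))" using Rint by (rule ennreal_leI)
  also have "\<dots> = ennreal (\<psi> w + hw - \<phi>s) + ennreal (3 * \<gamma> / 2 * (\<sigma>2 / real M))"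
  proof -
    have "0 \<le> \<psi> w + hw - \<phi>s" using lb[OF hw] by simp
    moreover note s20
    ultimately show ?thesis using g Mr by (simp add: ennreal_plus)
  qed
  finally show ?thesis unfolding st_def Gm_def .
qed


lemma lip_cont:
  fixes f :: "'a::metric_space \<Rightarrow> 'b::metric_space"
  assumes "\<And>x y. dist (f x) (f y) \<le> C * dist x y"
  shows "continuous_on UNIV f"
proof (rule lipschitz_on_continuous_on)
  show "(max C 0)-lipschitz_on UNIV f"
  proof (rule lipschitz_onI)
    fix x y :: 'a
    have "C * dist x y \<le> max C 0 * dist x y" by (intro mult_right_mono) auto
    then show "dist (f x) (f y) \<le> max C 0 * dist x y" using assms[of x y] by linarith
  qed simp
qed

lemma prox_cont:
  fixes h :: "'a::euclidean_space \<Rightarrow> ereal"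
  assumes hp: "proper_fun h" and hc: "closed_fun h" and hv: "convex_fun h" and g: "\<gamma> > 0"
  shows "continuous_on UNIV (prox \<gamma> h)"
  by (rule lip_cont[of _ 1]) (simp add: dist_norm prox_nonexp[OF hp hc hv g])

lemma env_meas:
  fixes g :: "'a::euclidean_space \<Rightarrow> real"
  assumes lam: "lam > 0"
    and zmin: "\<And>w x. 1 / (2 * lam) * (norm (w - \<zeta> lam w))\<^sup>2 + g (\<zeta> lam w) \<le> 1 / (2 * lam) * (norm (w - x))\<^sup>2 + g x"
  shows "env g \<zeta> lam \<in> borel_measurable borel"
  unfolding borel_measurable_iff_less
proof
  fix a
  have "{w \<in> space borel. env g \<zeta> lam w < a} = (\<Union>x. {w. 1 / (2 * lam) * (norm (w - x))\<^sup>2 + g x < a})"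
  proof (safe)
    fix w assume "env g \<zeta> lam w < a"
    then show "w \<in> (\<Union>x. {w. 1 / (2 * lam) * (norm (w - x))\<^sup>2 + g x < a})"
      unfolding env_def by auto
  next
    fix w x assume "1 / (2 * lam) * (norm (w - x))\<^sup>2 + g x < a"
    then show "env g \<zeta> lam w < a" unfolding env_def using zmin[of w x] by linarith
  qed simp
  also have "open \<dots>"
    by (intro open_UN ballI open_Collect_less continuous_intros)
  finally show "{w \<in> space borel. env g \<zeta> lam w < a} \<in> sets borel" by simp
qed

lemma h_meas:
  fixes h :: "'a::euclidean_space \<Rightarrow> ereal"
  assumes hp: "proper_fun h" and hc: "closed_fun h"
  shows "h \<in> borel_measurable borel"
  unfolding borel_measurable_ereal_iff_Ioi
proof
  fix a :: ereal
  have cl: "closed {x. h x \<le> a}"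
  proof (cases a)
    case (real t)
    have "{x. h x \<le> a} = (\<lambda>x. (x, t)) -` {(x, t::real). h x \<le> ereal t}" using real by auto
    also have "closed \<dots>" using hc unfolding closed_fun_def
      by (intro continuous_closed_vimage) (auto intro!: continuous_intros)
    finally show ?thesis .
  next
    case PInf then show ?thesis by simp
  next
    case MInf
    then have "{x. h x \<le> a} = {}" using hp unfolding proper_fun_def by auto
    then show ?thesis by simp
  qed
  have "h -` {a<..} \<inter> space borel = - {x. h x \<le> a}" by auto
  also have "\<dots> \<in> sets borel" using cl by (intro borel_open) (simp add: open_Compl)
  finally show "h -` {a<..} \<inter> space borel \<in> sets borel" .
qed

lemma mbspa_cong:
  assumes "\<And>m j. m < n \<Longrightarrow> j \<in> {1..M} \<Longrightarrow> xi (Suc m) j = xi' (Suc m) j"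
  shows "mbspa G \<zeta> h lam \<gamma> M xi w1 n = mbspa G \<zeta> h lam \<gamma> M xi' w1 n"
  using assms
proof (induction n)
  case 0 then show ?case by simp
next
  case (Suc n)
  have ih: "mbspa G \<zeta> h lam \<gamma> M xi w1 n = mbspa G \<zeta> h lam \<gamma> M xi' w1 n"
    using Suc.prems by (intro Suc.IH) auto
  have "(\<Sum>j = 1..M. G (mbspa G \<zeta> h lam \<gamma> M xi' w1 n) (xi (Suc n) j))
      = (\<Sum>j = 1..M. G (mbspa G \<zeta> h lam \<gamma> M xi' w1 n) (xi' (Suc n) j))"
    using Suc.prems by (intro sum.cong) auto
  then show ?case by (simp add: Let_def ih)
qed

lemma mbspa_fin:
  fixes h :: "'a::euclidean_space \<Rightarrow> ereal"
  assumes hp: "proper_fun h" and hc: "closed_fun h" and hv: "convex_fun h" and g: "\<gamma> > 0"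
    and hw1: "h w1 = ereal hw1"
  shows "\<exists>v. h (mbspa G \<zeta> h lam \<gamma> M xi w1 n) = ereal v"
proof (cases n)
  case 0 then show ?thesis using hw1 by simp
next
  case (Suc m)
  then show ?thesis using prox_spec[OF hp hc hv g] by (simp add: Let_def) blast
qed

lemma mbspa_meas:
  fixes G :: "'a::euclidean_space \<Rightarrow> 'b \<Rightarrow> 'a"
  assumes Gm: "case_prod G \<in> borel_measurable (borel \<Otimes>\<^sub>M D)"
    and zm: "\<zeta> lam \<in> borel_measurable borel"
    and pc: "continuous_on UNIV (prox \<gamma> h)"
    and n: "n \<le> N"
  shows "(\<lambda>x. mbspa G \<zeta> h lam \<gamma> M (\<lambda>k j. x (k, j)) w1 n) \<in> borel_measurable (PiM ({1..N} \<times> {1..M}) (\<lambda>_. D))"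
  using n
proof (induction n)
  case 0 then show ?case by simp
next
  case (Suc n)
  let ?Q = "PiM ({1..N} \<times> {1..M}) (\<lambda>_. D)"
  let ?W = "\<lambda>x. mbspa G \<zeta> h lam \<gamma> M (\<lambda>k j. x (k, j)) w1 n"
  have W[measurable]: "?W \<in> borel_measurable ?Q" using Suc by simp
  have Gj: "(\<lambda>x. G (?W x) (x (Suc n, j))) \<in> borel_measurable ?Q" if "j \<in> {1..M}" for j
  proof -
    have "(\<lambda>x. (?W x, x (Suc n, j))) \<in> measurable ?Q (borel \<Otimes>\<^sub>M D)"
      using that Suc.prems by (intro measurable_Pair W) (auto intro!: measurable_component_singleton)
    from measurable_compose[OF this Gm] show ?thesis by simp
  qed
  have S: "(\<lambda>x. \<Sum>j = 1..M. G (?W x) (x (Suc n, j))) \<in> borel_measurable ?Q"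
    using Gj by (intro borel_measurable_sum) auto
  have Z: "(\<lambda>x. \<zeta> lam (?W x)) \<in> borel_measurable ?Q"
    using measurable_compose[OF W zm] by simp
  have inner: "(\<lambda>x. ?W x - \<gamma> *\<^sub>R ((1 / real M) *\<^sub>R (\<Sum>j = 1..M. G (?W x) (x (Suc n, j))) + (1 / lam) *\<^sub>R (?W x - \<zeta> lam (?W x))))
      \<in> borel_measurable ?Q"
    using S Z W by measurable
  have "(\<lambda>x. prox \<gamma> h (?W x - \<gamma> *\<^sub>R ((1 / real M) *\<^sub>R (\<Sum>j = 1..M. G (?W x) (x (Suc n, j))) + (1 / lam) *\<^sub>R (?W x - \<zeta> lam (?W x)))))
      \<in> borel_measurable ?Q"
    using measurable_compose[OF inner borel_measurable_continuous_onI[OF pc]] by simp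
  then show ?case by (simp add: Let_def)
qed


lemma step_exp:
  fixes h :: "'a::euclidean_space \<Rightarrow> ereal" and \<psi> :: "'a \<Rightarrow> real" and G :: "'a \<Rightarrow> 'b \<Rightarrow> 'a"
  assumes D: "prob_space D" and M: "M > 0" and n: "n < N"
    and hp: "proper_fun h" and hc: "closed_fun h" and hv: "convex_fun h" and g: "\<gamma> > 0"
    and desc: "\<And>x y. \<psi> y \<le> \<psi> x + g\<psi> x \<bullet> (y - x) + Lg / 2 * (norm (y - x))\<^sup>2"
    and gL: "\<gamma> * Lg = 1"
    and hw1: "h w1 = ereal hw1"
    and Gun: "\<And>w. integrable D (G w) \<and> (\<integral>\<xi>. G w \<xi> \<partial>D) = gradf w"
    and Gvar: "\<And>w. integrable D (\<lambda>\<xi>. (norm (G w \<xi> - gradf w))\<^sup>2) \<and> (\<integral>\<xi>. (norm (G w \<xi> - gradf w))\<^sup>2 \<partial>D) \<le> \<sigma>2"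
    and Gmeas: "case_prod G \<in> borel_measurable (borel \<Otimes>\<^sub>M D)"
    and zm: "\<zeta> lam \<in> borel_measurable borel"
    and gpsi: "\<And>w. g\<psi> w = gradf w + (1 / lam) *\<^sub>R (w - \<zeta> lam w)"
    and gpm: "g\<psi> \<in> borel_measurable borel"
    and psim: "\<psi> \<in> borel_measurable borel"
    and lb: "\<And>y hy. h y = ereal hy \<Longrightarrow> \<phi>s \<le> \<psi> y + hy"
  shows "(\<integral>\<^sup>+ x. ennreal (\<psi> (mbspa G \<zeta> h lam \<gamma> M (\<lambda>k j. x (k, j)) w1 (Suc n))
                  + real_of_ereal (h (mbspa G \<zeta> h lam \<gamma> M (\<lambda>k j. x (k, j)) w1 (Suc n))) - \<phi>s)
            \<partial>PiM ({1..N} \<times> {1..M}) (\<lambda>_. D))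
       + (\<integral>\<^sup>+ x. ennreal (\<gamma> / 4 * (norm ((1 / \<gamma>) *\<^sub>R (mbspa G \<zeta> h lam \<gamma> M (\<lambda>k j. x (k, j)) w1 n
                  - prox \<gamma> h (mbspa G \<zeta> h lam \<gamma> M (\<lambda>k j. x (k, j)) w1 n - \<gamma> *\<^sub>R g\<psi> (mbspa G \<zeta> h lam \<gamma> M (\<lambda>k j. x (k, j)) w1 n)))))\<^sup>2)
            \<partial>PiM ({1..N} \<times> {1..M}) (\<lambda>_. D))
     \<le> (\<integral>\<^sup>+ x. ennreal (\<psi> (mbspa G \<zeta> h lam \<gamma> M (\<lambda>k j. x (k, j)) w1 n)
                  + real_of_ereal (h (mbspa G \<zeta> h lam \<gamma> M (\<lambda>k j. x (k, j)) w1 n)) - \<phi>s)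
            \<partial>PiM ({1..N} \<times> {1..M}) (\<lambda>_. D))
       + ennreal (3 * \<gamma> / 2 * (\<sigma>2 / real M))"
proof -
  define K where "K = {1..N} \<times> {1..M}"
  define B where "B = {Suc n} \<times> {1..M}"
  define A where "A = K - B"
  define Q where "Q = PiM K (\<lambda>_. D)"
  define W where "W m x = mbspa G \<zeta> h lam \<gamma> M (\<lambda>k j. x (k, j)) w1 m" for m x
  define Wa where "Wa a = W n a" for a
  define \<Phi>r where "\<Phi>r w = \<psi> w + real_of_ereal (h w) - \<phi>s" for w
  define Gm where "Gm w = (1 / \<gamma>) *\<^sub>R (w - prox \<gamma> h (w - \<gamma> *\<^sub>R g\<psi> w))" for w
  define c where "c = ennreal (3 * \<gamma> / 2 * (\<sigma>2 / real M))"
  define st where "st w b = prox \<gamma> h (w - \<gamma> *\<^sub>R ((1 / real M) *\<^sub>R (\<Sum>i\<in>B. G w (b i)) + (g\<psi> w - gradf w)))" for w b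
  have KAB: "K = A \<union> B" and AB: "A \<inter> B = {}" and finA: "finite A" and finB: "finite B"
    using n unfolding A_def B_def K_def by auto
  interpret PS: product_sigma_finite "\<lambda>_::nat\<times>nat. D" using PD_sf[OF D] .
  have PQ: "prob_space Q" unfolding Q_def using D by (intro prob_space_PiM) auto
  have PB: "prob_space (PiM B (\<lambda>_. D))" using D by (intro prob_space_PiM) auto
  have pc: "continuous_on UNIV (prox \<gamma> h)" by (rule prox_cont[OF hp hc hv g])
  have Wm: "W m \<in> borel_measurable Q" if "m \<le> N" for m
    unfolding W_def Q_def K_def by (rule mbspa_meas[where G=G and \<zeta>=\<zeta> and lam=lam, OF Gmeas zm pc that])
  have hm: "h \<in> borel_measurable borel" by (rule h_meas[OF hp hc])
  have \<Phi>m: "\<Phi>r \<in> borel_measurable borel" unfolding \<Phi>r_def using hm psim by measurable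
  have Gmm: "Gm \<in> borel_measurable borel" unfolding Gm_def
    using measurable_compose[OF _ borel_measurable_continuous_onI[OF pc]] gpm by measurable
  have m1: "(\<lambda>x. ennreal (\<Phi>r (W m x))) \<in> borel_measurable Q" if "m \<le> N" for m
    using measurable_compose[OF Wm[OF that] \<Phi>m] by measurable
  have m2: "(\<lambda>x. ennreal (\<gamma> / 4 * (norm (Gm (W m x)))\<^sup>2)) \<in> borel_measurable Q" if "m \<le> N" for m
    using measurable_compose[OF Wm[OF that] Gmm] by measurable
  have Wmerge: "W n (merge A B (a, b)) = Wa a" for a b
    unfolding Wa_def W_def
  proof (rule mbspa_cong)
    fix m j assume "m < n" "j \<in> {1..M}"
    then have "(Suc m, j) \<in> A" using n unfolding A_def B_def K_def by auto
    then show "merge A B (a, b) (Suc m, j) = a (Suc m, j)" by (simp add: merge_def)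
  qed
  have Wmerge2: "W (Suc n) (merge A B (a, b)) = st (Wa a) b" for a b
  proof -
    have "(\<Sum>j = 1..M. G (Wa a) (merge A B (a, b) (Suc n, j))) = (\<Sum>i\<in>B. G (Wa a) (b i))"
    proof -
      have "(\<Sum>j = 1..M. G (Wa a) (merge A B (a, b) (Suc n, j))) = (\<Sum>j = 1..M. G (Wa a) (b (Suc n, j)))"
        by (intro sum.cong) (auto simp: merge_def A_def B_def)
      also have "\<dots> = (\<Sum>i\<in>B. G (Wa a) (b i))"
        unfolding B_def by (subst sum.reindex[symmetric, of "\<lambda>j. (Suc n, j)", unfolded comp_def])
          (auto simp: inj_on_def intro!: sum.cong)
      finally show ?thesis .
    qed
    moreover have "g\<psi> (Wa a) - gradf (Wa a) = (1 / lam) *\<^sub>R (Wa a - \<zeta> lam (Wa a))" using gpsi by simp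
    ultimately show ?thesis
      using Wmerge[of a b] unfolding st_def by (simp add: W_def Let_def)
  qed
  define F where "F x = ennreal (\<Phi>r (W (Suc n) x)) + ennreal (\<gamma> / 4 * (norm (Gm (W n x)))\<^sup>2)" for x
  have Fm: "F \<in> borel_measurable Q" unfolding F_def using m1[of "Suc n"] m2[of n] n by auto
  have "(\<integral>\<^sup>+ x. ennreal (\<Phi>r (W (Suc n) x)) \<partial>Q) + (\<integral>\<^sup>+ x. ennreal (\<gamma> / 4 * (norm (Gm (W n x)))\<^sup>2) \<partial>Q)
      = (\<integral>\<^sup>+ x. F x \<partial>Q)"
    unfolding F_def using m1[of "Suc n"] m2[of n] n by (intro nn_integral_add[symmetric]) auto
  also have "\<dots> = (\<integral>\<^sup>+ a. (\<integral>\<^sup>+ b. F (merge A B (a, b)) \<partial>PiM B (\<lambda>_. D)) \<partial>PiM A (\<lambda>_. D))"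
    using Fm unfolding Q_def KAB by (intro PS.product_nn_integral_fold AB finA finB) auto
  also have "\<dots> \<le> (\<integral>\<^sup>+ a. ennreal (\<Phi>r (Wa a)) + c \<partial>PiM A (\<lambda>_. D))"
  proof (intro nn_integral_mono)
    fix a
    obtain hw where hw: "h (Wa a) = ereal hw"
      using mbspa_fin[OF hp hc hv g hw1] unfolding Wa_def W_def by blast
    have "(\<integral>\<^sup>+ b. F (merge A B (a, b)) \<partial>PiM B (\<lambda>_. D))
        = (\<integral>\<^sup>+ b. ennreal (\<psi> (st (Wa a) b) + real_of_ereal (h (st (Wa a) b)) - \<phi>s) + ennreal (\<gamma> / 4 * (norm (Gm (Wa a)))\<^sup>2) \<partial>PiM B (\<lambda>_. D))"
      unfolding F_def Wmerge Wmerge2 \<Phi>r_def by simp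
    also have "\<dots> \<le> ennreal (\<psi> (Wa a) + hw - \<phi>s) + c"
      unfolding st_def Gm_def c_def
      by (rule inner_step[OF D finB _ M hp hc hv g desc gL hw])
         (use Gun Gvar lb in \<open>auto simp: B_def card_cartesian_product\<close>)
    also have "\<dots> = ennreal (\<Phi>r (Wa a)) + c" unfolding \<Phi>r_def using hw by simp
    finally show "(\<integral>\<^sup>+ b. F (merge A B (a, b)) \<partial>PiM B (\<lambda>_. D)) \<le> ennreal (\<Phi>r (Wa a)) + c" .
  qed
  also have "\<dots> = (\<integral>\<^sup>+ a. (\<integral>\<^sup>+ b. ennreal (\<Phi>r (W n (merge A B (a, b)))) + c \<partial>PiM B (\<lambda>_. D)) \<partial>PiM A (\<lambda>_. D))"
    unfolding Wmerge using PB by (simp add: prob_space.emeasure_space_1)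
  also have "\<dots> = (\<integral>\<^sup>+ x. ennreal (\<Phi>r (W n x)) + c \<partial>Q)"
    using m1[of n] n unfolding Q_def KAB by (intro PS.product_nn_integral_fold[symmetric] AB finA finB) auto
  also have "\<dots> = (\<integral>\<^sup>+ x. ennreal (\<Phi>r (W n x)) \<partial>Q) + c"
    using m1[of n] n PQ by (subst nn_integral_add) (auto simp: prob_space.emeasure_space_1)
  finally show ?thesis unfolding W_def \<Phi>r_def Gm_def c_def Q_def K_def .
qed


lemma telescope_enn:
  fixes E gg :: "nat \<Rightarrow> ennreal"
  assumes "\<And>n. n < N \<Longrightarrow> E (Suc n) + gg n \<le> E n + c"
  shows "(\<Sum>n<N. gg n) \<le> E 0 + of_nat N * c"
proof -
  have "m \<le> N \<Longrightarrow> E m + (\<Sum>n<m. gg n) \<le> E 0 + of_nat m * c" for m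
  proof (induction m)
    case 0 then show ?case by simp
  next
    case (Suc m)
    have "E (Suc m) + (\<Sum>n<Suc m. gg n) = (E (Suc m) + gg m) + (\<Sum>n<m. gg n)"
      by (simp add: algebra_simps)
    also have "\<dots> \<le> (E m + c) + (\<Sum>n<m. gg n)" using assms[of m] Suc.prems by (intro add_right_mono) auto
    also have "\<dots> = (E m + (\<Sum>n<m. gg n)) + c" by (simp add: algebra_simps)
    also have "\<dots> \<le> (E 0 + of_nat m * c) + c" using Suc by (intro add_right_mono) auto
    also have "\<dots> = E 0 + of_nat (Suc m) * c" by (simp add: algebra_simps)
    finally show ?case .
  qed
  from this[of N] have "E N + (\<Sum>n<N. gg n) \<le> E 0 + of_nat N * c" by simp
  moreover have "(\<Sum>n<N. gg n) \<le> E N + (\<Sum>n<N. gg n)" by simp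
  ultimately show ?thesis by (rule order_trans[rotated])
qed

lemma R_transfer:
  fixes Xi :: "nat \<Rightarrow> nat \<Rightarrow> 'w \<Rightarrow> 'b" and R :: "'w \<Rightarrow> nat"
    and Y :: "nat \<Rightarrow> (nat \<times> nat \<Rightarrow> 'b) \<Rightarrow> ennreal" and V :: "'w \<Rightarrow> ennreal"
  assumes P: "prob_space P" and D: "prob_space D" and N: "N > 0"
    and Xm: "\<And>k j. (k, j) \<in> {1..N} \<times> {1..M} \<Longrightarrow> Xi k j \<in> measurable P D"
    and R_meas: "R \<in> measurable P (count_space UNIV)"
    and R_unif: "\<And>k. k \<in> {1..N} \<Longrightarrow> measure P {\<omega> \<in> space P. R \<omega> = k} = 1 / real N"
    and R_indep: "distr P ((\<Pi>\<^sub>M kj \<in> {1..N} \<times> {1..M}. D) \<Otimes>\<^sub>M count_space UNIV)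
          (\<lambda>\<omega>. (restrict (\<lambda>(k, j). Xi k j \<omega>) ({1..N} \<times> {1..M}), R \<omega>))
        = (\<Pi>\<^sub>M kj \<in> {1..N} \<times> {1..M}. D) \<Otimes>\<^sub>M distr P (count_space UNIV) R"
    and Ym: "\<And>n. n < N \<Longrightarrow> Y n \<in> borel_measurable (PiM ({1..N} \<times> {1..M}) (\<lambda>_. D))"
    and V: "\<And>\<omega>. \<omega> \<in> space P \<Longrightarrow> R \<omega> \<in> {1..N} \<Longrightarrow>
              V \<omega> = Y (R \<omega> - 1) (restrict (\<lambda>(k, j). Xi k j \<omega>) ({1..N} \<times> {1..M}))"
  shows "(\<integral>\<^sup>+ \<omega>. V \<omega> \<partial>P) = ennreal (1 / real N) * (\<Sum>n<N. \<integral>\<^sup>+ x. Y n x \<partial>PiM ({1..N} \<times> {1..M}) (\<lambda>_. D))"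
proof -
  interpret P: prob_space P by fact
  define K where "K = {1..N} \<times> {1..M}"
  define Q where "Q = PiM K (\<lambda>_. D)"
  define X where "X \<omega> = restrict (\<lambda>(k, j). Xi k j \<omega>) K" for \<omega>
  define Rd where "Rd = distr P (count_space UNIV) R"
  define H where "H p = (if snd p \<in> {1..N} then Y (snd p - 1) (fst p) else 0)" for p
  have PQ: "prob_space Q" unfolding Q_def using D by (intro prob_space_PiM) auto
  have PRd: "prob_space Rd" unfolding Rd_def by (rule P.prob_space_distr[OF R_meas])
  interpret PP: pair_sigma_finite Q Rd
    using PQ PRd by (simp add: pair_sigma_finite_def prob_space_imp_sigma_finite)
  have Xmeas: "X \<in> measurable P Q" unfolding X_def Q_def
    by (rule measurable_restrict) (use Xm in \<open>auto simp: K_def\<close>)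
  have XRm: "(\<lambda>\<omega>. (X \<omega>, R \<omega>)) \<in> measurable P (Q \<Otimes>\<^sub>M count_space UNIV)"
    using Xmeas R_meas by (intro measurable_Pair)
  have fr: "(\<lambda>p. if r \<in> {1..N} then Y (r - 1) (fst p) else 0) \<in> borel_measurable (Q \<Otimes>\<^sub>M count_space UNIV)"
    if "r \<in> UNIV" for r :: nat
  proof (cases "r \<in> {1..N}")
    case True
    then have "Y (r - 1) \<in> borel_measurable Q" unfolding Q_def K_def by (intro Ym) auto
    then show ?thesis using True by measurable
  next
    case False
    then have "(\<lambda>p. if r \<in> {1..N} then Y (r - 1) (fst p) else 0) = (\<lambda>p. 0)" by (simp only: if_not_P[OF False] if_False)
    show ?thesis unfolding \<open>_ = (\<lambda>p. 0)\<close> by simp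
  qed
  have Hm1: "H \<in> borel_measurable (Q \<Otimes>\<^sub>M count_space UNIV)"
    using measurable_compose_countable'[where f="\<lambda>r p. if r \<in> {1..N} then Y (r - 1) (fst p) else 0" and g=snd and I=UNIV, OF fr measurable_snd] unfolding H_def by simp
  have sets_eq: "sets (Q \<Otimes>\<^sub>M Rd) = sets (Q \<Otimes>\<^sub>M count_space UNIV)"
    unfolding Rd_def by (intro sets_pair_measure_cong) auto
  have Hm2: "H \<in> borel_measurable (Q \<Otimes>\<^sub>M Rd)"
    unfolding measurable_cong_sets[OF sets_eq refl] by (rule Hm1)
  have RP: "R \<omega> \<in> {1..N}" if "\<omega> \<in> space P" "\<omega> \<notin> {\<omega> \<in> space P. R \<omega> \<notin> {1..N}}" for \<omega>
    using that by auto
  have Rs: "{\<omega> \<in> space P. R \<omega> \<in> S} \<in> sets P" for S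
  proof -
    have "{\<omega> \<in> space P. R \<omega> \<in> S} = R -` S \<inter> space P" by auto
    then show ?thesis using measurable_sets[OF R_meas, of S] by simp
  qed
  have Rsets: "{\<omega> \<in> space P. R \<omega> = k} \<in> sets P" for k
    using R_meas by measurable
  have null: "{\<omega> \<in> space P. R \<omega> \<notin> {1..N}} \<in> null_sets P"
  proof -
    have "measure P {\<omega> \<in> space P. R \<omega> \<in> {1..N}} = measure P (\<Union>k\<in>{1..N}. {\<omega> \<in> space P. R \<omega> = k})"
      by (intro arg_cong[where f="measure P"]) auto
    also have "\<dots> = (\<Sum>k\<in>{1..N}. measure P {\<omega> \<in> space P. R \<omega> = k})"
      by (intro P.finite_measure_finite_Union) (auto simp: disjoint_family_on_def Rsets)
    also have "\<dots> = 1" using N R_unif by simp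
    finally have m1: "measure P {\<omega> \<in> space P. R \<omega> \<in> {1..N}} = 1" .
    have "{\<omega> \<in> space P. R \<omega> \<notin> {1..N}} = space P - {\<omega> \<in> space P. R \<omega> \<in> {1..N}}" by auto
    moreover have "{\<omega> \<in> space P. R \<omega> \<in> {1..N}} \<in> sets P" by (rule Rs)
    ultimately have "measure P {\<omega> \<in> space P. R \<omega> \<notin> {1..N}} = 0"
      using m1 P.prob_compl by simp
    moreover have "{\<omega> \<in> space P. R \<omega> \<notin> {1..N}} \<in> sets P" using Rs[of "- {1..N}"] by simp
    ultimately show ?thesis by (simp add: P.emeasure_eq_measure null_sets_def)
  qed
  have "(\<integral>\<^sup>+ \<omega>. V \<omega> \<partial>P) = (\<integral>\<^sup>+ \<omega>. H (X \<omega>, R \<omega>) \<partial>P)"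
  proof (rule nn_integral_cong_AE)
    show "AE \<omega> in P. V \<omega> = H (X \<omega>, R \<omega>)"
      using null
    proof (rule AE_I')
      show "{\<omega> \<in> space P. V \<omega> \<noteq> H (X \<omega>, R \<omega>)} \<subseteq> {\<omega> \<in> space P. R \<omega> \<notin> {1..N}}"
      proof safe
        fix \<omega> assume "\<omega> \<in> space P" "V \<omega> \<noteq> H (X \<omega>, R \<omega>)" "R \<omega> \<in> {1..N}"
        then show False using V[of \<omega>] unfolding H_def X_def K_def by auto
      qed
    qed
  qed
  also have "\<dots> = (\<integral>\<^sup>+ p. H p \<partial>distr P (Q \<Otimes>\<^sub>M count_space UNIV) (\<lambda>\<omega>. (X \<omega>, R \<omega>)))"
    by (rule nn_integral_distr[symmetric, OF XRm]) (use Hm1 in simp)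
  also have "distr P (Q \<Otimes>\<^sub>M count_space UNIV) (\<lambda>\<omega>. (X \<omega>, R \<omega>)) = Q \<Otimes>\<^sub>M Rd"
    unfolding Q_def K_def X_def Rd_def by (rule R_indep)
  also have "(\<integral>\<^sup>+ p. H p \<partial>(Q \<Otimes>\<^sub>M Rd)) = (\<integral>\<^sup>+ r. (\<integral>\<^sup>+ x. H (x, r) \<partial>Q) \<partial>Rd)"
    by (rule PP.nn_integral_snd[symmetric, OF Hm2])
  also have "\<dots> = (\<integral>\<^sup>+ \<omega>. (\<integral>\<^sup>+ x. H (x, R \<omega>) \<partial>Q) \<partial>P)"
    unfolding Rd_def by (rule nn_integral_distr[OF R_meas]) simp
  also have "\<dots> = (\<integral>\<^sup>+ \<omega>. (\<Sum>k\<in>{1..N}. (\<integral>\<^sup>+ x. Y (k - 1) x \<partial>Q) * indicator {\<omega> \<in> space P. R \<omega> = k} \<omega>) \<partial>P)"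
  proof (rule nn_integral_cong)
    fix \<omega> assume "\<omega> \<in> space P"
    show "(\<integral>\<^sup>+ x. H (x, R \<omega>) \<partial>Q) = (\<Sum>k\<in>{1..N}. (\<integral>\<^sup>+ x. Y (k - 1) x \<partial>Q) * indicator {\<omega> \<in> space P. R \<omega> = k} \<omega>)"
    proof (cases "R \<omega> \<in> {1..N}")
      case True
      have "(\<Sum>k\<in>{1..N}. (\<integral>\<^sup>+ x. Y (k - 1) x \<partial>Q) * indicator {\<omega> \<in> space P. R \<omega> = k} \<omega>)
          = (\<Sum>k\<in>{R \<omega>}. (\<integral>\<^sup>+ x. Y (k - 1) x \<partial>Q) * indicator {\<omega> \<in> space P. R \<omega> = k} \<omega>)"
        using True \<open>\<omega> \<in> space P\<close> by (intro sum.mono_neutral_right) (auto simp: indicator_def)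
      then show ?thesis using True \<open>\<omega> \<in> space P\<close> unfolding H_def by (simp add: indicator_def)
    next
      case False
      then show ?thesis unfolding H_def by (auto simp: indicator_def intro!: sum.neutral)
    qed
  qed
  also have "\<dots> = (\<Sum>k\<in>{1..N}. (\<integral>\<^sup>+ x. Y (k - 1) x \<partial>Q) * emeasure P {\<omega> \<in> space P. R \<omega> = k})"
    using Rsets by (subst nn_integral_sum) (auto simp: nn_integral_cmult_indicator)
  also have "\<dots> = (\<Sum>k\<in>{1..N}. (\<integral>\<^sup>+ x. Y (k - 1) x \<partial>Q) * ennreal (1 / real N))"
    using R_unif by (intro sum.cong) (auto simp: P.emeasure_eq_measure)
  also have "\<dots> = ennreal (1 / real N) * (\<Sum>k\<in>{1..N}. (\<integral>\<^sup>+ x. Y (k - 1) x \<partial>Q))"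
    by (simp add: sum_distrib_left mult.commute)
  also have "(\<Sum>k\<in>{1..N}. (\<integral>\<^sup>+ x. Y (k - 1) x \<partial>Q)) = (\<Sum>n<N. (\<integral>\<^sup>+ x. Y n x \<partial>Q))"
    by (simp add: sum.atLeast1_atMost_eq)
  finally show ?thesis unfolding Q_def K_def .
qed



theorem lemma2:
  fixes f g :: "'a::euclidean_space \<Rightarrow> real"
    and h :: "'a \<Rightarrow> ereal"
    and gradf :: "'a \<Rightarrow> 'a"
    and F :: "'a \<Rightarrow> 'b \<Rightarrow> real"
    and G :: "'a \<Rightarrow> 'b \<Rightarrow> 'a"
    and D :: "'b measure"
    and P :: "'w measure"
    and Xi :: "nat \<Rightarrow> nat \<Rightarrow> 'w \<Rightarrow> 'b"
    and R :: "'w \<Rightarrow> nat"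
    and \<zeta> :: "real \<Rightarrow> 'a \<Rightarrow> 'a"
    and L \<sigma> \<alpha> \<theta> :: real and N :: nat and w1 wstar :: 'a
  assumes D_prob: "prob_space D"
    and f_exp: "\<And>w. integrable D (F w) \<and> f w = (\<integral>\<xi>. F w \<xi> \<partial>D)"
    and F_grad: "\<And>w \<xi>. ((\<lambda>v. F v \<xi>) has_derivative (\<lambda>u. G w \<xi> \<bullet> u)) (at w)"
    and f_grad: "\<And>w. (f has_derivative (\<lambda>u. gradf w \<bullet> u)) (at w)"
    and f_smooth: "\<And>x y. norm (gradf x - gradf y) \<le> L * norm (x - y)"
    and G_unbiased: "\<And>w. integrable D (G w) \<and> (\<integral>\<xi>. G w \<xi> \<partial>D) = gradf w"
    and G_var: "\<And>w. integrable D (\<lambda>\<xi>. (norm (G w \<xi> - gradf w))\<^sup>2)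
                     \<and> (\<integral>\<xi>. (norm (G w \<xi> - gradf w))\<^sup>2 \<partial>D) \<le> \<sigma>\<^sup>2"
    and G_meas: "case_prod G \<in> borel_measurable (borel \<Otimes>\<^sub>M D)"
    and \<zeta>_min: "\<And>lam w x. lam > 0 \<Longrightarrow>
          1 / (2 * lam) * (norm (w - \<zeta> lam w))\<^sup>2 + g (\<zeta> lam w) \<le> 1 / (2 * lam) * (norm (w - x))\<^sup>2 + g x"
    and \<zeta>_meas: "\<And>lam. lam > 0 \<Longrightarrow> \<zeta> lam \<in> borel_measurable borel"
    and h_proper: "proper_fun h" and h_closed: "closed_fun h" and h_convex: "convex_fun h"
    and N_pos: "N > 0"
    and wstar_min: "\<And>w. ereal (f wstar + env g \<zeta> (real N powr (-\<theta>)) wstar) + h wstar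
                        \<le> ereal (f w + env g \<zeta> (real N powr (-\<theta>)) w) + h w"
    and P_prob: "prob_space P"
    and Xi_iid: "prob_space.indep_vars P (\<lambda>_. D) (\<lambda>(k, j). Xi k j)
                   ({1..N} \<times> {1..nat \<lceil>real N powr \<alpha>\<rceil>})"
    and Xi_distr: "\<And>k j. k \<in> {1..N} \<Longrightarrow> j \<in> {1..nat \<lceil>real N powr \<alpha>\<rceil>} \<Longrightarrow> distr P D (Xi k j) = D"
    and R_meas: "R \<in> measurable P (count_space UNIV)"
    and R_unif: "\<And>k. k \<in> {1..N} \<Longrightarrow> measure P {\<omega> \<in> space P. R \<omega> = k} = 1 / real N"
    and R_indep: "distr P ((\<Pi>\<^sub>M kj \<in> {1..N} \<times> {1..nat \<lceil>real N powr \<alpha>\<rceil>}. D) \<Otimes>\<^sub>M count_space UNIV)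
          (\<lambda>\<omega>. (restrict (\<lambda>(k, j). Xi k j \<omega>) ({1..N} \<times> {1..nat \<lceil>real N powr \<alpha>\<rceil>}), R \<omega>))
        = (\<Pi>\<^sub>M kj \<in> {1..N} \<times> {1..nat \<lceil>real N powr \<alpha>\<rceil>}. D) \<Otimes>\<^sub>M distr P (count_space UNIV) R"
  shows "(let lam = real N powr (-\<theta>); \<gamma> = 1 / (L + real N powr \<theta>);
              M = nat \<lceil>real N powr \<alpha>\<rceil>;
              \<Phi> = (\<lambda>w. ereal (f w + env g \<zeta> lam w) + h w);
              wR = (\<lambda>\<omega>. mbspa G \<zeta> h lam \<gamma> M (\<lambda>k j. Xi k j \<omega>) w1 (R \<omega> - 1))
          in enn2ereal (\<integral>\<^sup>+ \<omega>. ennreal ((norm (grad_map gradf \<zeta> h lam \<gamma> (wR \<omega>)))\<^sup>2) \<partial>P)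
             \<le> ereal ((L + real N powr \<theta>) / real N) * (4 * (\<Phi> w1 - \<Phi> wstar))
                + ereal (6 / real M * \<sigma>\<^sup>2))"
proof -
  define lam where "lam = real N powr (-\<theta>)"
  define \<gamma> where "\<gamma> = 1 / (L + real N powr \<theta>)"
  define M where "M = nat \<lceil>real N powr \<alpha>\<rceil>"
  define \<psi> where "\<psi> w = f w + env g \<zeta> lam w" for w
  define g\<psi> where "g\<psi> w = gradf w + (1 / lam) *\<^sub>R (w - \<zeta> lam w)" for w
  define Lg where "Lg = L + real N powr \<theta>"
  define K where "K = {1..N} \<times> {1..M}"
  define Q where "Q = PiM K (\<lambda>_. D)"
  define W where "W n x = mbspa G \<zeta> h lam \<gamma> M (\<lambda>k j. x (k, j)) w1 n" for n x
  define \<Phi> where "\<Phi> w = ereal (f w + env g \<zeta> lam w) + h w" for w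
  define wR where "wR \<omega> = mbspa G \<zeta> h lam \<gamma> M (\<lambda>k j. Xi k j \<omega>) w1 (R \<omega> - 1)" for \<omega>
  have Npos: "real N > 0" using N_pos by simp
  have lam: "lam > 0" unfolding lam_def using Npos by simp
  have invlam: "1 / lam = real N powr \<theta>" unfolding lam_def using Npos by (simp add: powr_minus divide_inverse)
  have L0: "L \<ge> 0"
  proof -
    obtain e :: 'a where "e \<in> Basis" using nonempty_Basis by blast
    then have "norm e = 1" by simp
    have "0 \<le> norm (gradf e - gradf 0)" by simp
    also have "\<dots> \<le> L * norm (e - 0)" by (rule f_smooth)
    finally show ?thesis using \<open>norm e = 1\<close> by simp
  qed
  have Lgpos: "Lg > 0" unfolding Lg_def using L0 Npos by (simp add: add_nonneg_pos)
  have g: "\<gamma> > 0" unfolding \<gamma>_def using Lgpos Lg_def by simp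
  have gL: "\<gamma> * Lg = 1" unfolding \<gamma>_def Lg_def using Lgpos Lg_def by simp
  have M: "M > 0"
  proof -
    have "real N powr \<alpha> > 0" using Npos by simp
    then have "\<lceil>real N powr \<alpha>\<rceil> \<ge> 1" by (simp add: le_ceiling_iff)  
    then show ?thesis unfolding M_def by simp
  qed
  have zmin: "\<And>w x. 1 / (2 * lam) * (norm (w - \<zeta> lam w))\<^sup>2 + g (\<zeta> lam w) \<le> 1 / (2 * lam) * (norm (w - x))\<^sup>2 + g x"
    using \<zeta>_min[OF lam] .
  have desc: "\<psi> y \<le> \<psi> x + g\<psi> x \<bullet> (y - x) + Lg / 2 * (norm (y - x))\<^sup>2" for x y
  proof -
    have a: "f y \<le> f x + gradf x \<bullet> (y - x) + L / 2 * (norm (y - x))\<^sup>2"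
      by (rule descent_lemma[OF f_grad f_smooth])
    have b: "env g \<zeta> lam y \<le> env g \<zeta> lam x + ((1 / lam) *\<^sub>R (x - \<zeta> lam x)) \<bullet> (y - x) + 1 / (2 * lam) * (norm (y - x))\<^sup>2"
      by (rule env_upper[where g=g and \<zeta>=\<zeta>, OF lam zmin])
    have c: "Lg / 2 = L / 2 + 1 / (2 * lam)" unfolding Lg_def invlam[symmetric] by simp
    show ?thesis using a b unfolding \<psi>_def g\<psi>_def c by (simp add: inner_add_left algebra_simps)
  qed
  have goal_eq: "?thesis \<longleftrightarrow> enn2ereal (\<integral>\<^sup>+ \<omega>. ennreal ((norm (grad_map gradf \<zeta> h lam \<gamma> (wR \<omega>)))\<^sup>2) \<partial>P)
             \<le> ereal (Lg / real N) * (4 * (\<Phi> w1 - \<Phi> wstar)) + ereal (6 / real M * \<sigma>\<^sup>2)"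
    unfolding Let_def lam_def[symmetric] \<gamma>_def[symmetric] M_def[symmetric] wR_def \<Phi>_def Lg_def ..
  obtain x0 where x0: "h x0 \<noteq> \<infinity>" using h_proper unfolding proper_fun_def by auto
  have hninf: "h x \<noteq> -\<infinity>" for x using h_proper unfolding proper_fun_def by auto
  have \<Phi>ws_fin: "\<Phi> wstar \<noteq> \<infinity>"
  proof -
    have "\<Phi> wstar \<le> \<Phi> x0" using wstar_min[of x0] unfolding \<Phi>_def lam_def .
    moreover have "\<Phi> x0 \<noteq> \<infinity>" unfolding \<Phi>_def using x0 hninf[of x0] by (cases "h x0") auto
    ultimately show ?thesis by auto
  qed
  obtain hws where hws: "h wstar = ereal hws"
    using \<Phi>ws_fin hninf[of wstar] unfolding \<Phi>_def by (cases "h wstar") auto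
  define \<phi>s where "\<phi>s = \<psi> wstar + hws"
  have \<Phi>ws: "\<Phi> wstar = ereal \<phi>s" unfolding \<Phi>_def \<phi>s_def \<psi>_def hws by simp
  have lb: "\<phi>s \<le> \<psi> y + hy" if "h y = ereal hy" for y hy
    using wstar_min[of y] that unfolding \<phi>s_def \<psi>_def hws lam_def[symmetric] by simp
  show ?thesis
  proof (cases "h w1 = \<infinity>")
    case True
    have "\<Phi> w1 = \<infinity>" unfolding \<Phi>_def True by simp
    then have "\<Phi> w1 - \<Phi> wstar = \<infinity>" unfolding \<Phi>ws by simp
    moreover have "Lg / real N > 0" using Lgpos Npos by simp
    ultimately have inf: "ereal (Lg / real N) * (4 * (\<Phi> w1 - \<Phi> wstar)) + ereal (6 / real M * \<sigma>\<^sup>2) = \<infinity>"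
      using Lgpos N_pos by simp
    show ?thesis unfolding goal_eq inf by simp
  next
    case False
    then obtain hw1 where hw1: "h w1 = ereal hw1" using hninf[of w1] by (cases "h w1") auto
    have zm: "\<zeta> lam \<in> borel_measurable borel" by (rule \<zeta>_meas[OF lam])
    have gcont: "continuous_on UNIV gradf" by (rule lip_cont[of _ L]) (simp add: dist_norm f_smooth)
    have fcont: "continuous_on UNIV f"
      using has_derivative_continuous[OF f_grad] by (simp add: continuous_at_imp_continuous_on)
    have envm: "env g \<zeta> lam \<in> borel_measurable borel" by (rule env_meas[where g=g and \<zeta>=\<zeta>, OF lam zmin])
    have psim: "\<psi> \<in> borel_measurable borel" unfolding \<psi>_def
      using borel_measurable_continuous_onI[OF fcont] envm by measurable
    have gpm: "g\<psi> \<in> borel_measurable borel" unfolding g\<psi>_def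
      using borel_measurable_continuous_onI[OF gcont] zm by measurable
    have pc: "continuous_on UNIV (prox \<gamma> h)" by (rule prox_cont[OF h_proper h_closed h_convex g])
    define \<Phi>r where "\<Phi>r w = \<psi> w + real_of_ereal (h w) - \<phi>s" for w
    define Gm where "Gm w = (1 / \<gamma>) *\<^sub>R (w - prox \<gamma> h (w - \<gamma> *\<^sub>R g\<psi> w))" for w
    have Gm_eq: "grad_map gradf \<zeta> h lam \<gamma> w = Gm w" for w unfolding grad_map_def Gm_def g\<psi>_def ..
    have Gmm: "Gm \<in> borel_measurable borel" unfolding Gm_def
      using measurable_compose[OF _ borel_measurable_continuous_onI[OF pc]] gpm by measurable
    define E where "E n = (\<integral>\<^sup>+ x. ennreal (\<Phi>r (W n x)) \<partial>Q)" for n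
    define gg where "gg n = (\<integral>\<^sup>+ x. ennreal (\<gamma> / 4 * (norm (Gm (W n x)))\<^sup>2) \<partial>Q)" for n
    define gn where "gn n = (\<integral>\<^sup>+ x. ennreal ((norm (Gm (W n x)))\<^sup>2) \<partial>Q)" for n
    define c where "c = ennreal (3 * \<gamma> / 2 * (\<sigma>\<^sup>2 / real M))"
    have step: "E (Suc n) + gg n \<le> E n + c" if "n < N" for n
      unfolding E_def gg_def c_def \<Phi>r_def Gm_def W_def Q_def K_def
      by (rule step_exp[where G=G and \<zeta>=\<zeta> and lam=lam and \<psi>=\<psi> and g\<psi>=g\<psi> and h=h and gradf=gradf and D=D, OF D_prob M that h_proper h_closed h_convex g desc gL hw1 G_unbiased G_var G_meas zm
            g\<psi>_def gpm psim lb])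
    have tel: "(\<Sum>n<N. gg n) \<le> E 0 + of_nat N * c" by (rule telescope_enn[where E=E and gg=gg and c=c, OF step])
    have PQ: "prob_space Q" unfolding Q_def using D_prob by (intro prob_space_PiM) auto
    have E0: "E 0 = ennreal (\<Phi>r w1)" unfolding E_def W_def using PQ by (simp add: prob_space.emeasure_space_1)
    have Wm: "W n \<in> borel_measurable Q" if "n \<le> N" for n
      unfolding W_def Q_def K_def by (rule mbspa_meas[where G=G and \<zeta>=\<zeta> and lam=lam, OF G_meas zm pc that])
    have Ym: "(\<lambda>x. ennreal ((norm (Gm (W n x)))\<^sup>2)) \<in> borel_measurable Q" if "n < N" for n
    proof -
      have [measurable]: "(\<lambda>x. Gm (W n x)) \<in> borel_measurable Q"
        using measurable_compose[OF Wm[of n] Gmm] that by simp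
      show ?thesis by measurable
    qed
    have gg_eq: "gg n = ennreal (\<gamma> / 4) * gn n" if "n < N" for n
    proof -
      have "gg n = (\<integral>\<^sup>+ x. ennreal (\<gamma> / 4) * ennreal ((norm (Gm (W n x)))\<^sup>2) \<partial>Q)"
        unfolding gg_def using g by (intro nn_integral_cong) (simp add: ennreal_mult[symmetric])
      also have "\<dots> = ennreal (\<gamma> / 4) * gn n" unfolding gn_def by (rule nn_integral_cmult[OF Ym[OF that]])
      finally show ?thesis .
    qed
    have Xm: "Xi k j \<in> measurable P D" if "(k, j) \<in> {1..N} \<times> {1..M}" for k j
    proof -
      have "\<forall>i\<in>{1..N} \<times> {1..M}. (\<lambda>(k, j). Xi k j) i \<in> measurable P D"
        using Xi_iid unfolding prob_space.indep_vars_def[OF P_prob] M_def by auto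
      then show ?thesis using that by fastforce
    qed
    have V: "ennreal ((norm (grad_map gradf \<zeta> h lam \<gamma> (wR \<omega>)))\<^sup>2)
        = (\<lambda>n x. ennreal ((norm (Gm (W n x)))\<^sup>2)) (R \<omega> - 1) (restrict (\<lambda>(k, j). Xi k j \<omega>) ({1..N} \<times> {1..M}))"
      if "\<omega> \<in> space P" "R \<omega> \<in> {1..N}" for \<omega>
    proof -
      have "wR \<omega> = W (R \<omega> - 1) (restrict (\<lambda>(k, j). Xi k j \<omega>) ({1..N} \<times> {1..M}))"
        unfolding wR_def W_def
      proof (rule mbspa_cong)
        fix m j assume "m < R \<omega> - 1" "j \<in> {1..M}"
        then show "Xi (Suc m) j \<omega> = restrict (\<lambda>(k, j). Xi k j \<omega>) ({1..N} \<times> {1..M}) (Suc m, j)"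
          using that by auto
      qed
      then show ?thesis by (simp add: Gm_eq)
    qed
    have trans: "(\<integral>\<^sup>+ \<omega>. ennreal ((norm (grad_map gradf \<zeta> h lam \<gamma> (wR \<omega>)))\<^sup>2) \<partial>P)
        = ennreal (1 / real N) * (\<Sum>n<N. gn n)"
      unfolding gn_def Q_def K_def
      by (rule R_transfer[OF P_prob D_prob N_pos Xm R_meas R_unif R_indep[folded M_def], of "\<lambda>n x. ennreal ((norm (Gm (W n x)))\<^sup>2)"])
         (use Ym V in \<open>auto simp: Q_def K_def\<close>)
    have \<Phi>r0: "0 \<le> \<Phi>r w1" unfolding \<Phi>r_def using lb[OF hw1] hw1 by simp
    have s0: "0 \<le> \<sigma>\<^sup>2" by simp
    define A where "A = \<Phi>r w1 + real N * (3 * \<gamma> / 2 * (\<sigma>\<^sup>2 / real M))"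
    have A0: "0 \<le> A" unfolding A_def using \<Phi>r0 g M by simp
    have "(\<Sum>n<N. gg n) = ennreal (\<gamma> / 4) * (\<Sum>n<N. gn n)"
      using gg_eq by (simp add: sum_distrib_left)
    moreover have "E 0 + of_nat N * c = ennreal A"
      unfolding E0 c_def A_def using \<Phi>r0 g M
      by (simp add: ennreal_of_nat_eq_real_of_nat ennreal_mult[symmetric] ennreal_plus[symmetric] del: ennreal_plus)
    ultimately have t1: "ennreal (\<gamma> / 4) * (\<Sum>n<N. gn n) \<le> ennreal A" using tel by simp
    have "(\<Sum>n<N. gn n) = ennreal (4 / \<gamma>) * (ennreal (\<gamma> / 4) * (\<Sum>n<N. gn n))"
    proof -
      have "ennreal (4 / \<gamma>) * ennreal (\<gamma> / 4) = 1" using g by (simp add: ennreal_mult[symmetric])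
      then show ?thesis by (simp add: mult.assoc[symmetric])
    qed
    also have "\<dots> \<le> ennreal (4 / \<gamma>) * ennreal A" using t1 by (rule mult_left_mono) simp
    also have "\<dots> = ennreal (4 / \<gamma> * A)" by (rule ennreal_mult[symmetric]) (use g A0 in auto)
    finally have t2: "(\<Sum>n<N. gn n) \<le> ennreal (4 / \<gamma> * A)" .
    define B where "B = 1 / real N * (4 / \<gamma> * A)"
    have B0: "0 \<le> B" unfolding B_def using g A0 Npos by simp
    have t3: "(\<integral>\<^sup>+ \<omega>. ennreal ((norm (grad_map gradf \<zeta> h lam \<gamma> (wR \<omega>)))\<^sup>2) \<partial>P) \<le> ennreal B"
    proof -
      have "ennreal (1 / real N) * (\<Sum>n<N. gn n) \<le> ennreal (1 / real N) * ennreal (4 / \<gamma> * A)"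
        using t2 by (rule mult_left_mono) simp
      also have "\<dots> = ennreal (1 / real N * (4 / \<gamma> * A))" by (rule ennreal_mult[symmetric]) (use g A0 in auto)
      finally show ?thesis unfolding trans B_def .
    qed
    have ig: "1 / \<gamma> = Lg" unfolding \<gamma>_def Lg_def by simp
    have BB: "B = Lg / real N * (4 * \<Phi>r w1) + 6 / real M * \<sigma>\<^sup>2"
    proof -
      have "B = 4 * (1 / \<gamma>) * \<Phi>r w1 / real N + 6 * (\<gamma> * (1 / \<gamma>)) * \<sigma>\<^sup>2 / real M"
        unfolding B_def A_def using Npos M by (simp add: field_simps)
      also have "\<dots> = Lg / real N * (4 * \<Phi>r w1) + 6 / real M * \<sigma>\<^sup>2"
        unfolding ig using gL by (simp add: field_simps)
      finally show ?thesis .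
    qed
    have R: "ereal (Lg / real N) * (4 * (\<Phi> w1 - \<Phi> wstar)) + ereal (6 / real M * \<sigma>\<^sup>2) = ereal B"
    proof -
      have "\<Phi> w1 - \<Phi> wstar = ereal (\<Phi>r w1)"
        unfolding \<Phi>ws unfolding \<Phi>_def \<Phi>r_def \<psi>_def hw1 by simp
      then show ?thesis unfolding BB by simp
    qed
    have "enn2ereal (\<integral>\<^sup>+ \<omega>. ennreal ((norm (grad_map gradf \<zeta> h lam \<gamma> (wR \<omega>)))\<^sup>2) \<partial>P) \<le> enn2ereal (ennreal B)"
      using t3 by (simp add: less_eq_ennreal.rep_eq[symmetric])
    also have "\<dots> = ereal B" using B0 by simp
    finally show ?thesis unfolding goal_eq R .

  qed
qed

end
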